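(* Let $H,K$ be Hilbert spaces and $T$ a densely defined closed operator from $D(T)\subset H$ into $K$ with closed range. Then $T|T|$ is a closed operator and $R(T|T|)=R(T)$.
   Context: $|T|=(T^{*}T)^{1/2}$; the product $T|T|$ is defined on its natural domain $\{x\in D(|T|):|T|x\in D(T)\}$. *)

theory Defs
  imports "HOL-Analysis.Analysis"
begin

class complex_vector = real_vector +
  fixes scaleC :: "complex \<Rightarrow> 'a \<Rightarrow> 'a"
  assumes scaleC_add_right: "scaleC a (x + y) = scaleC a x + scaleC a y"
    and scaleC_add_left: "scaleC (a + b) x = scaleC a x + scaleC b x"
    and scaleC_scaleC: "scaleC a (scaleC b x) = scaleC (a * b) x"
    and scaleC_one: "scaleC 1 x = x"
    and scaleR_scaleC: "scaleR r x = scaleC (complex_of_real r) x"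

class complex_inner = complex_vector + real_normed_vector +
  fixes cinner :: "'a \<Rightarrow> 'a \<Rightarrow> complex"
  assumes cinner_commute: "cinner x y = cnj (cinner y x)"
    and cinner_add_left: "cinner (x + y) z = cinner x z + cinner y z"
    and cinner_scaleC_left: "cinner (scaleC a x) y = a * cinner x y"
    and cinner_self_real: "cinner x x \<in> \<real>"
    and cinner_self_nonneg: "0 \<le> Re (cinner x x)"
    and cinner_self_zero: "cinner x x = 0 \<longleftrightarrow> x = 0"
    and norm_eq_sqrt_cinner: "norm x = sqrt (Re (cinner x x))"

class chilbert = complex_inner + complete_space

text \<open>An operator from H to K is represented by a pair: its domain D (a subset
of H) and a function T, of which only the values on D matter.\<close>

definition csubspace :: "'a::complex_vector set \<Rightarrow> bool" where
  "csubspace D \<longleftrightarrow> 0 \<in> D \<and> (\<forall>x\<in>D. \<forall>y\<in>D. x + y \<in> D) \<and> (\<forall>c. \<forall>x\<in>D. scaleC c x \<in> D)"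

definition lin_op :: "'a::complex_vector set \<Rightarrow> ('a \<Rightarrow> 'b::complex_vector) \<Rightarrow> bool" where
  "lin_op D T \<longleftrightarrow> csubspace D \<and> (\<forall>x\<in>D. \<forall>y\<in>D. T (x + y) = T x + T y)
      \<and> (\<forall>c. \<forall>x\<in>D. T (scaleC c x) = scaleC c (T x))"

definition densely_defined :: "'a::chilbert set \<Rightarrow> ('a \<Rightarrow> 'b::chilbert) \<Rightarrow> bool" where
  "densely_defined D T \<longleftrightarrow> lin_op D T \<and> closure D = UNIV"

definition graph :: "'a set \<Rightarrow> ('a \<Rightarrow> 'b) \<Rightarrow> ('a \<times> 'b) set" where
  "graph D T = {(x, T x) | x. x \<in> D}"

definition closed_op :: "'a::chilbert set \<Rightarrow> ('a \<Rightarrow> 'b::chilbert) \<Rightarrow> bool" where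
  "closed_op D T \<longleftrightarrow> lin_op D T \<and> closed (graph D T)"

text \<open>Adjoint of a densely defined operator (values outside the domain set to 0).\<close>

definition adj_dom :: "'a::chilbert set \<Rightarrow> ('a \<Rightarrow> 'b::chilbert) \<Rightarrow> 'b set" where
  "adj_dom D T = {y. \<exists>z. \<forall>x\<in>D. cinner (T x) y = cinner x z}"

definition adj :: "'a::chilbert set \<Rightarrow> ('a \<Rightarrow> 'b::chilbert) \<Rightarrow> 'b \<Rightarrow> 'a" where
  "adj D T y = (if y \<in> adj_dom D T then (THE z. \<forall>x\<in>D. cinner (T x) y = cinner x z) else 0)"

definition comp_dom :: "'b set \<Rightarrow> ('b \<Rightarrow> 'c) \<Rightarrow> 'a set \<Rightarrow> ('a \<Rightarrow> 'b) \<Rightarrow> 'a set" where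
  "comp_dom DA A DB B = {x \<in> DB. B x \<in> DA}"

definition self_adjoint :: "'a::chilbert set \<Rightarrow> ('a \<Rightarrow> 'a) \<Rightarrow> bool" where
  "self_adjoint D S \<longleftrightarrow> densely_defined D S \<and> adj_dom D S = D \<and> (\<forall>x\<in>D. adj D S x = S x)"

definition positive_op :: "'a::chilbert set \<Rightarrow> ('a \<Rightarrow> 'a) \<Rightarrow> bool" where
  "positive_op D S \<longleftrightarrow> (\<forall>x\<in>D. cinner (S x) x \<in> \<real> \<and> 0 \<le> Re (cinner (S x) x))"

definition is_sqrt_TsT :: "'a::chilbert set \<Rightarrow> ('a \<Rightarrow> 'b::chilbert) \<Rightarrow> 'a set \<Rightarrow> ('a \<Rightarrow> 'a) \<Rightarrow> bool" where
  "is_sqrt_TsT D T DS S \<longleftrightarrow>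
     self_adjoint DS S \<and> positive_op DS S \<and> (\<forall>x. x \<notin> DS \<longrightarrow> S x = 0) \<and>
     comp_dom DS S DS S = comp_dom (adj_dom D T) (adj D T) D T \<and>
     (\<forall>x \<in> comp_dom DS S DS S. S (S x) = adj D T (T x))"

definition abs_op_pair :: "'a::chilbert set \<Rightarrow> ('a \<Rightarrow> 'b::chilbert) \<Rightarrow> 'a set \<times> ('a \<Rightarrow> 'a)" where
  "abs_op_pair D T = (THE p. is_sqrt_TsT D T (fst p) (snd p))"

definition abs_dom :: "'a::chilbert set \<Rightarrow> ('a \<Rightarrow> 'b::chilbert) \<Rightarrow> 'a set" where
  "abs_dom D T = fst (abs_op_pair D T)"

definition abs_op :: "'a::chilbert set \<Rightarrow> ('a \<Rightarrow> 'b::chilbert) \<Rightarrow> 'a \<Rightarrow> 'a" where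
  "abs_op D T = snd (abs_op_pair D T)"

end

theory Submission
  imports Defs "HOL-Computational_Algebra.Formal_Power_Series"
begin

lemma scaleC_zero_left [simp]: "scaleC 0 (x::'a::complex_vector) = 0"
proof -
  have "scaleC 0 x = scaleC 0 x + scaleC 0 x"
    using scaleC_add_left[of 0 0 x] by simp
  then show ?thesis by simp
qed

lemma scaleC_zero_right [simp]: "scaleC a (0::'a::complex_vector) = 0"
proof -
  have "scaleC a (0::'a) = scaleC a 0 + scaleC a 0"
    using scaleC_add_right[of a 0 0] by simp
  then show ?thesis by simp
qed

lemma scaleC_minus_right: "scaleC a (- x) = - scaleC a (x::'a::complex_vector)"
proof -
  have "scaleC a (- x) + scaleC a x = 0"
    using scaleC_add_right[of a "-x" x] by simp
  then show ?thesis by (simp add: eq_neg_iff_add_eq_0)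
qed

lemma scaleC_diff_right: "scaleC a (x - y) = scaleC a x - scaleC a (y::'a::complex_vector)"
  using scaleC_add_right[of a x "-y"] by (simp add: scaleC_minus_right)

lemma scaleC_minus_left: "scaleC (- a) x = - scaleC a (x::'a::complex_vector)"
proof -
  have "scaleC (- a) x + scaleC a x = 0"
    using scaleC_add_left[of "-a" a x] by simp
  then show ?thesis by (simp add: eq_neg_iff_add_eq_0)
qed

lemma scaleC_sum_right: "scaleC a (sum f A) = (\<Sum>i\<in>A. scaleC a (f i :: 'a::complex_vector))"
  by (induction A rule: infinite_finite_induct) (auto simp: scaleC_add_right)

lemma bounded_linear_scaleC_aux: "linear (scaleC c :: 'a::complex_vector \<Rightarrow> 'a)"
  by (auto intro!: linearI simp: scaleC_add_right scaleR_scaleC scaleC_scaleC mult.commute)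

lemma cinner_zero_left [simp]: "cinner 0 y = 0"
proof -
  have "cinner (0::'a) y = cinner 0 y + cinner 0 y"
    using cinner_add_left[of 0 0 y] by simp
  then show ?thesis by simp
qed

lemma cinner_add_right: "cinner x (y + z) = cinner x y + cinner x z"
  by (metis cinner_add_left cinner_commute complex_cnj_add)

lemma cinner_zero_right [simp]: "cinner x 0 = 0"
  by (metis cinner_commute cinner_zero_left complex_cnj_zero)

lemma cinner_scaleC_right: "cinner x (scaleC a y) = cnj a * cinner x y"
  by (metis cinner_commute cinner_scaleC_left complex_cnj_cnj complex_cnj_mult)

lemma cinner_minus_left: "cinner (- x) y = - cinner x y"
  using cinner_scaleC_left[of "-1" x y] scaleC_minus_left[of 1 x] by (simp add: scaleC_one)

lemma cinner_minus_right: "cinner x (- y) = - cinner x y"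
  by (metis cinner_commute cinner_minus_left complex_cnj_minus)

lemma cinner_diff_left: "cinner (x - y) z = cinner x z - cinner y z"
  using cinner_add_left[of x "-y" z] by (simp add: cinner_minus_left)

lemma cinner_diff_right: "cinner x (y - z) = cinner x y - cinner x z"
  using cinner_add_right[of x y "-z"] by (simp add: cinner_minus_right)

lemma cinner_scaleR_left: "cinner (scaleR r x) y = of_real r * cinner x y"
  by (simp add: scaleR_scaleC cinner_scaleC_left)

lemma cinner_scaleR_right: "cinner x (scaleR r y) = of_real r * cinner x y"
  by (simp add: scaleR_scaleC cinner_scaleC_right)

lemma cinner_sum_left: "cinner (sum f A) y = (\<Sum>i\<in>A. cinner (f i) y)"
  by (induction A rule: infinite_finite_induct) (auto simp: cinner_add_left)

lemma cinner_sum_right: "cinner x (sum f A) = (\<Sum>i\<in>A. cinner x (f i))"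
  by (induction A rule: infinite_finite_induct) (auto simp: cinner_add_right)

lemma cinner_self_Im: "Im (cinner x x) = 0"
  using cinner_self_real[of x] by (simp add: complex_is_Real_iff)

lemma norm_sq_cinner: "(norm x)^2 = Re (cinner x x)"
  using norm_eq_sqrt_cinner[of x] cinner_self_nonneg[of x] by simp

lemma cinner_self_eq: "cinner x x = complex_of_real ((norm x)^2)"
  by (simp add: complex_eq_iff norm_sq_cinner cinner_self_Im)

lemma cnj_cinner_self: "cnj (cinner x x) = cinner x x"
  by (simp add: cinner_self_eq)

lemma norm_eq_zero_cinner: "cinner x x = 0 \<longleftrightarrow> x = 0"
  by (rule cinner_self_zero)

lemma Re_cinner_commute: "Re (cinner x y) = Re (cinner y x)"
  by (subst cinner_commute) simp

lemma norm_scaleC: "norm (scaleC a (x::'a::complex_inner)) = cmod a * norm x"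
proof -
  have "(norm (scaleC a x))^2 = Re (a * cnj a * cinner x x)"
    by (simp add: norm_sq_cinner cinner_scaleC_left cinner_scaleC_right cinner_self_Im algebra_simps)
  also have "\<dots> = (cmod a)^2 * (norm x)^2"
    by (simp add: complex_mult_cnj cinner_self_eq cmod_power2 flip: of_real_mult)
  finally show ?thesis
    by (metis norm_ge_zero power_mult_distrib real_sqrt_abs abs_of_nonneg
        mult_nonneg_nonneg real_sqrt_unique)
qed

lemma norm_add_sq: "(norm (x + y))^2 = (norm x)^2 + (norm y)^2 + 2 * Re (cinner x y)"
proof -
  have "(norm (x + y))^2 = Re (cinner x x + cinner x y + cinner y x + cinner y y)"
    by (simp add: norm_sq_cinner cinner_add_left cinner_add_right)
  then show ?thesis
    by (simp add: norm_sq_cinner Re_cinner_commute[of y x])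
qed

lemma norm_diff_sq: "(norm (x - y))^2 = (norm x)^2 + (norm y)^2 - 2 * Re (cinner x y)"
proof -
  have "(norm (x - y))^2 = Re (cinner x x - cinner x y - cinner y x + cinner y y)"
    by (simp add: norm_sq_cinner cinner_diff_left cinner_diff_right)
  then show ?thesis
    by (simp add: norm_sq_cinner Re_cinner_commute[of y x])
qed

lemma cauchy_schwarz_c: "cmod (cinner x y) \<le> norm x * norm y"
proof (cases "y = 0")
  case True then show ?thesis by simp
next
  case False
  define t where "t = cinner x y / cinner y y"
  define z where "z = x - scaleC t y"
  have yy: "cinner y y \<noteq> 0" using False norm_eq_zero_cinner by blast
  have zy: "cinner z y = 0"
    using yy by (simp add: z_def cinner_diff_left cinner_scaleC_left t_def)
  have "cinner z z = cinner z x"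
    by (simp add: z_def[of] cinner_diff_right cinner_scaleC_right zy[unfolded z_def])
  also have "\<dots> = cinner x x - t * cinner y x"
    by (simp add: z_def cinner_diff_left cinner_scaleC_left)
  finally have zz: "cinner z z = cinner x x - t * cinner y x" .
  have ny: "(norm y)^2 > 0" using False by simp
  have "t * cinner y x = complex_of_real ((cmod (cinner x y))^2 / (norm y)^2)"
    unfolding t_def cinner_self_eq
    by (subst cinner_commute[of y x]) (simp add: complex_mult_cnj cmod_power2 field_simps flip: of_real_mult)
  with zz have "Re (cinner z z) = (norm x)^2 - (cmod (cinner x y))^2 / (norm y)^2"
    by (simp add: norm_sq_cinner)
  with cinner_self_nonneg[of z] have "(cmod (cinner x y))^2 / (norm y)^2 \<le> (norm x)^2" by simp
  then have "(cmod (cinner x y))^2 \<le> (norm x * norm y)^2"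
    using ny by (simp add: field_simps power_mult_distrib)
  then show ?thesis
    by (meson norm_ge_zero mult_nonneg_nonneg power2_le_imp_le)
qed

lemma bounded_bilinear_cinner: "bounded_bilinear (cinner :: 'a::complex_inner \<Rightarrow> 'a \<Rightarrow> complex)"
proof (rule bounded_bilinear.intro)
  show "\<exists>K. \<forall>a b::'a. norm (cinner a b) \<le> norm a * norm b * K"
    by (rule exI[of _ 1]) (simp add: cauchy_schwarz_c)
qed (auto simp: cinner_add_left cinner_add_right cinner_scaleR_left cinner_scaleR_right scaleR_conv_of_real)

lemmas tendsto_cinner [tendsto_intros] = bounded_bilinear.tendsto[OF bounded_bilinear_cinner]
lemmas continuous_on_cinner [continuous_intros] = bounded_bilinear.continuous_on[OF bounded_bilinear_cinner]

lemma bounded_linear_cinner_left: "bounded_linear (\<lambda>x. cinner x y)"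
  by (rule bounded_bilinear.bounded_linear_left[OF bounded_bilinear_cinner])

lemma bounded_linear_cinner_right: "bounded_linear (\<lambda>y. cinner x y)"
  by (rule bounded_bilinear.bounded_linear_right[OF bounded_bilinear_cinner])

lemma bounded_linear_scaleC: "bounded_linear (scaleC c :: 'a::complex_inner \<Rightarrow> 'a)"
  by (rule bounded_linear_intro[of _ "cmod c"])
     (auto simp: scaleC_add_right scaleR_scaleC scaleC_scaleC mult.commute norm_scaleC)

lemma cinner_eq_zero_all: "(\<And>y. cinner x y = 0) \<Longrightarrow> x = 0"
  using norm_eq_zero_cinner by blast

lemma cinner_eq_zero_all': "(\<And>y. cinner y x = 0) \<Longrightarrow> x = 0"
  using norm_eq_zero_cinner by blast


lemma csubspace_0: "csubspace D \<Longrightarrow> 0 \<in> D"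
  by (simp add: csubspace_def)

lemma csubspace_add: "csubspace D \<Longrightarrow> x \<in> D \<Longrightarrow> y \<in> D \<Longrightarrow> x + y \<in> D"
  by (simp add: csubspace_def)

lemma csubspace_scaleC: "csubspace D \<Longrightarrow> x \<in> D \<Longrightarrow> scaleC c x \<in> D"
  by (simp add: csubspace_def)

lemma csubspace_uminus: "csubspace D \<Longrightarrow> x \<in> D \<Longrightarrow> - x \<in> D"
  using csubspace_scaleC[of D x "-1"] by (simp add: scaleC_minus_left scaleC_one)

lemma csubspace_diff: "csubspace D \<Longrightarrow> x \<in> D \<Longrightarrow> y \<in> D \<Longrightarrow> x - y \<in> D"
  using csubspace_add[of D x "-y"] csubspace_uminus[of D y] by simp

lemma csubspace_scaleR: "csubspace D \<Longrightarrow> x \<in> D \<Longrightarrow> scaleR r x \<in> D"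
  by (simp add: csubspace_scaleC scaleR_scaleC)

lemma csubspace_sum: "csubspace D \<Longrightarrow> (\<And>i. i \<in> A \<Longrightarrow> f i \<in> D) \<Longrightarrow> sum f A \<in> D"
  by (induction A rule: infinite_finite_induct) (auto simp: csubspace_0 csubspace_add)

lemma csubspace_UNIV: "csubspace UNIV"
  by (simp add: csubspace_def)

lemma csubspace_closure:
  fixes M :: "'a::complex_inner set"
  assumes "csubspace M"
  shows "csubspace (closure M)"
  unfolding csubspace_def
proof (intro conjI ballI allI)
  show "0 \<in> closure M" using assms csubspace_0 closure_subset by blast
next
  fix x y assume "x \<in> closure M" "y \<in> closure M"
  then obtain a b where a: "\<forall>n. a n \<in> M" "a \<longlonglongrightarrow> x" and b: "\<forall>n. b n \<in> M" "b \<longlonglongrightarrow> y"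
    by (auto simp: closure_sequential)
  have "\<forall>n. a n + b n \<in> M" using a b assms csubspace_add by blast
  moreover have "(\<lambda>n. a n + b n) \<longlonglongrightarrow> x + y" using a b by (intro tendsto_intros)
  ultimately show "x + y \<in> closure M" by (auto simp: closure_sequential)
next
  fix c x assume "x \<in> closure M"
  then obtain a where a: "\<forall>n. a n \<in> M" "a \<longlonglongrightarrow> x"
    by (auto simp: closure_sequential)
  have "\<forall>n. scaleC c (a n) \<in> M" using a assms csubspace_scaleC by blast
  moreover have "(\<lambda>n. scaleC c (a n)) \<longlonglongrightarrow> scaleC c x"
    using a bounded_linear.tendsto[OF bounded_linear_scaleC] by blast
  ultimately show "scaleC c x \<in> closure M" by (auto simp: closure_sequential)
qed

section \<open>Projection theorem\<close>

lemma quad_aux: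
  fixes a b :: real
  assumes "b \<ge> 0" and h: "\<And>t. 2 * t * a \<le> t^2 * b"
  shows "a = 0"
proof -
  define t where "t = a / (b + 1)"
  have b1: "b + 1 > 0" using assms by simp
  have ta: "t * (b + 1) = a" using b1 by (simp add: t_def)
  have "2 * t * a * (b + 1)^2 \<le> t^2 * b * (b + 1)^2"
    using h[of t] by (intro mult_right_mono) auto
  moreover have "2 * t * a * (b + 1)^2 = 2 * a * (t * (b + 1)) * (b + 1)"
    by (simp add: power2_eq_square algebra_simps)
  moreover have "t^2 * b * (b + 1)^2 = (t * (b + 1)) * (t * (b + 1)) * b"
    by (simp add: power2_eq_square algebra_simps)
  ultimately have "2 * a * a * (b + 1) \<le> a * a * b" unfolding ta by simp
  then have "(a * a) * (b + 2) \<le> 0" by (simp add: algebra_simps)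
  moreover have "b + 2 > 0" using assms by simp
  ultimately have "a * a \<le> 0" by (simp add: mult_le_0_iff)
  then have "a * a = 0" using zero_le_square[of a] by linarith
  then show ?thesis by simp
qed

lemma parallelogram:
  "(norm (a + b))^2 + (norm (a - b))^2 = 2 * (norm a)^2 + 2 * (norm (b::'a::complex_inner))^2"
  by (simp add: norm_add_sq norm_diff_sq)

lemma proj_exists:
  fixes M :: "'a::chilbert set"
  assumes sub: "csubspace M" and cl: "closed M"
  shows "\<exists>p\<in>M. \<forall>m\<in>M. cinner (x - p) m = 0"
proof -
  define d where "d = infdist x M"
  have ne: "M \<noteq> {}" using sub csubspace_0 by blast
  have d0: "d \<ge> 0" by (simp add: d_def infdist_nonneg)
  have dle: "d \<le> norm (x - m)" if "m \<in> M" for m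
    using infdist_le[OF that, of x] by (simp add: d_def dist_norm)
  have "\<exists>m\<in>M. norm (x - m) < d + 1 / (real n + 1)" for n
  proof -
    have "infdist x M < d + 1 / (real n + 1)" by (simp add: d_def)
    then have "(INF a\<in>M. dist x a) < d + 1 / (real n + 1)" using infdist_notempty[OF ne] by simp
    moreover have bdd: "bdd_below ((\<lambda>a. dist x a) ` M)" by (rule bdd_belowI[of _ 0]) auto
    ultimately have "\<exists>m\<in>M. dist x m < d + 1 / (real n + 1)"
      unfolding cINF_less_iff[OF ne bdd] by blast
    then obtain m where "m \<in> M" "dist x m < d + 1 / (real n + 1)" by blast
    then show ?thesis by (auto simp: dist_norm)
  qed
  then obtain m where mM: "\<And>n. m n \<in> M" and mlt: "\<And>n. norm (x - m n) < d + 1 / (real n + 1)"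
    by metis
  have key: "(norm (m i - m j))^2 \<le> (8 * d + 4) / (real N + 1)" if "i \<ge> N" "j \<ge> N" for i j N
  proof -
    define ei where "ei = 1 / (real i + 1)"
    define ej where "ej = 1 / (real j + 1)"
    define e where "e = 1 / (real N + 1)"
    have eiN: "ei \<le> e" "ej \<le> e" using that by (auto simp: ei_def ej_def e_def field_simps)
    have e1: "e \<le> 1" "ei \<ge> 0" "ej \<ge> 0" by (auto simp: e_def ei_def ej_def)
    have mid: "scaleR (1/2) (m i + m j) \<in> M"
      using sub mM csubspace_add csubspace_scaleR by blast
    have "d \<le> norm (x - scaleR (1/2) (m i + m j))" using dle[OF mid] .
    moreover have "x - scaleR (1/2) (m i + m j) = scaleR (1/2) ((x - m i) + (x - m j))"
    proof -
      have "x = scaleR (1/2) x + scaleR (1/2) x" by (simp flip: scaleR_add_left)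
      then show ?thesis by (simp add: algebra_simps)
    qed
    ultimately have "2 * d \<le> norm ((x - m i) + (x - m j))" by simp
    then have "(2 * d)^2 \<le> (norm ((x - m i) + (x - m j)))^2"
      using d0 by (intro power_mono) auto
    then have A: "4 * d^2 \<le> (norm ((x - m i) + (x - m j)))^2"
      by (simp add: power_mult_distrib)
    have B: "(norm (x - m i))^2 \<le> (d + ei)^2"
      using mlt[of i] by (intro power_mono) (auto simp: ei_def)
    have C: "(norm (x - m j))^2 \<le> (d + ej)^2"
      using mlt[of j] by (intro power_mono) (auto simp: ej_def)
    have "(x - m i) - (x - m j) = m j - m i" by simp
    then have "(norm (m i - m j))^2 = 2 * (norm (x - m i))^2 + 2 * (norm (x - m j))^2 - (norm ((x - m i) + (x - m j)))^2"
      using parallelogram[of "x - m i" "x - m j"] by (simp add: norm_minus_commute)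
    also have "\<dots> \<le> 2 * (d + ei)^2 + 2 * (d + ej)^2 - 4 * d^2" using A B C by linarith
    also have "\<dots> = 4 * d * (ei + ej) + 2 * ei^2 + 2 * ej^2" by (simp add: power2_eq_square algebra_simps)
    also have "\<dots> \<le> 4 * d * (2 * e) + 2 * e + 2 * e"
    proof -
      have "ei * ei \<le> 1 * ei" using eiN e1 by (intro mult_right_mono) auto
      then have "ei^2 \<le> e" using eiN by (simp add: power2_eq_square)
      moreover have "ej * ej \<le> 1 * ej" using eiN e1 by (intro mult_right_mono) auto
      then have "ej^2 \<le> e" using eiN by (simp add: power2_eq_square)
      moreover have "4 * d * (ei + ej) \<le> 4 * d * (2 * e)" using eiN d0 by (intro mult_left_mono) auto
      ultimately show ?thesis by linarith
    qed
    also have "\<dots> = (8 * d + 4) * e" by (simp add: algebra_simps)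
    also have "\<dots> = (8 * d + 4) / (real N + 1)" by (simp add: e_def)
    finally show ?thesis .
  qed
  have "Cauchy m"
  proof (rule metric_CauchyI)
    fix eps :: real assume "eps > 0"
    obtain N0 :: nat where "(8 * d + 4) / eps^2 < real N0"
      using reals_Archimedean2 by blast
    then have N: "(8 * d + 4) / eps^2 < real N0 + 1" by simp
    define N where "N = N0"
    have "(8 * d + 4) / (real N + 1) < eps^2"
      using N \<open>eps > 0\<close> d0 by (simp add: field_simps N_def)
    then have "\<forall>i\<ge>N. \<forall>j\<ge>N. dist (m i) (m j) < eps"
    proof (intro allI impI)
      fix i j assume ij: "i \<ge> N" "j \<ge> N"
      assume lt: "(8 * d + 4) / (real N + 1) < eps^2"
      have "(norm (m i - m j))^2 < eps^2" using key[OF ij] lt by linarith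
      then show "dist (m i) (m j) < eps"
        using \<open>eps > 0\<close> by (simp add: dist_norm power2_less_imp_less)
    qed
    then show "\<exists>M. \<forall>m'\<ge>M. \<forall>n\<ge>M. dist (m m') (m n) < eps" by blast
  qed
  then obtain p where p: "m \<longlonglongrightarrow> p" using convergent_eq_Cauchy by blast
  have pM: "p \<in> M" using cl mM p closed_sequential_limits by blast
  have "norm (x - p) \<le> d"
  proof (rule tendsto_le[OF trivial_limit_sequentially])
    show "(\<lambda>n. norm (x - m n)) \<longlonglongrightarrow> norm (x - p)" using p by (intro tendsto_intros)
    show "(\<lambda>n. d + 1 / (real n + 1)) \<longlonglongrightarrow> d"
      using LIMSEQ_inverse_real_of_nat_add[of d]
      by (simp add: inverse_eq_divide add.commute)
    show "\<forall>\<^sub>F n in sequentially. norm (x - m n) \<le> d + 1 / (real n + 1)"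
      using mlt less_imp_le by (auto intro!: always_eventually)
  qed
  then have pmin: "norm (x - p) \<le> norm (x - q)" if "q \<in> M" for q
    using dle[OF that] by linarith
  have re0: "Re (cinner (x - p) q) = 0" if "q \<in> M" for q
  proof (rule quad_aux)
    show "(norm q)^2 \<ge> 0" by simp
    fix t :: real
    have "p + scaleR t q \<in> M" using sub pM that csubspace_add csubspace_scaleR by blast
    then have "norm (x - p) \<le> norm ((x - p) - scaleR t q)"
      using pmin by (simp add: algebra_simps)
    then have "(norm (x - p))^2 \<le> (norm ((x - p) - scaleR t q))^2"
      by (simp add: power_mono)
    also have "\<dots> = (norm (x - p))^2 + t^2 * (norm q)^2 - 2 * t * Re (cinner (x - p) q)"
      by (simp add: norm_diff_sq cinner_scaleR_right power_mult_distrib)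
    finally show "2 * t * Re (cinner (x - p) q) \<le> t^2 * (norm q)^2" by simp
  qed
  show ?thesis
  proof (intro bexI[OF _ pM] ballI)
    fix q assume q: "q \<in> M"
    have "scaleC \<i> q \<in> M" using sub q csubspace_scaleC by blast
    from re0[OF this] have "Im (cinner (x - p) q) = 0" by (simp add: cinner_scaleC_right)
    with re0[OF q] show "cinner (x - p) q = 0" by (simp add: complex_eq_iff)
  qed
qed

lemma dense_if_orth:
  fixes M :: "'a::chilbert set"
  assumes sub: "csubspace M" and orth: "\<And>z. (\<And>m. m \<in> M \<Longrightarrow> cinner z m = 0) \<Longrightarrow> z = 0"
  shows "closure M = UNIV"
proof -
  have "x \<in> closure M" for x
  proof -
    obtain p where p: "p \<in> closure M" "\<And>m. m \<in> closure M \<Longrightarrow> cinner (x - p) m = 0"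
      using proj_exists[OF csubspace_closure[OF sub] closed_closure, of x] by blast
    have "x - p = 0" using orth p(2) closure_subset by blast
    then show ?thesis using p(1) by simp
  qed
  then show ?thesis by auto
qed

section \<open>Product of Hilbert spaces\<close>

instantiation prod :: (complex_vector, complex_vector) complex_vector
begin
definition scaleC_prod_def: "scaleC c x = (scaleC c (fst x), scaleC c (snd x))"
instance
  by standard (auto simp: scaleC_prod_def scaleC_add_right scaleC_add_left scaleC_scaleC
      scaleC_one scaleR_prod_def scaleR_scaleC)
end

instantiation prod :: (complex_inner, complex_inner) complex_inner
begin
definition cinner_prod_def: "cinner x y = cinner (fst x) (fst y) + cinner (snd x) (snd y)"
instance
proof
  fix x y z :: "'a \<times> 'b" and a :: complex
  show "cinner x y = cnj (cinner y x)"
    by (simp add: cinner_prod_def cinner_commute[of "fst x"] cinner_commute[of "snd x"])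
  show "cinner (x + y) z = cinner x z + cinner y z"
    by (simp add: cinner_prod_def cinner_add_left)
  show "cinner (scaleC a x) y = a * cinner x y"
    by (simp add: cinner_prod_def scaleC_prod_def cinner_scaleC_left distrib_left)
  have e: "cinner x x = complex_of_real ((norm (fst x))^2 + (norm (snd x))^2)"
    by (simp add: cinner_prod_def cinner_self_eq)
  show "cinner x x \<in> \<real>" by (simp add: e)
  show "0 \<le> Re (cinner x x)" by (simp add: e)
  have "cinner x x = 0 \<longleftrightarrow> (norm (fst x))^2 + (norm (snd x))^2 = 0"
    unfolding e of_real_eq_0_iff ..
  also have "\<dots> \<longleftrightarrow> (norm (fst x))^2 = 0 \<and> (norm (snd x))^2 = 0"
    by (intro add_nonneg_eq_0_iff) auto
  also have "\<dots> \<longleftrightarrow> x = 0" by (simp add: prod_eq_iff)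
  finally show "(cinner x x = 0) = (x = 0)" .
  show "norm x = sqrt (Re (cinner x x))"
    by (simp add: e norm_prod_def)
qed
end

instance prod :: (chilbert, chilbert) chilbert ..

lemma cinner_Pair: "cinner (a, b) (c, d) = cinner a c + cinner b d"
  by (simp add: cinner_prod_def)


declare cinner_self_zero[simp]

lemma lin_op_sub: "lin_op D T \<Longrightarrow> csubspace D"
  by (simp add: lin_op_def)

lemma lin_op_add: "lin_op D T \<Longrightarrow> x \<in> D \<Longrightarrow> y \<in> D \<Longrightarrow> T (x + y) = T x + T y"
  by (simp add: lin_op_def)

lemma lin_op_scaleC: "lin_op D T \<Longrightarrow> x \<in> D \<Longrightarrow> T (scaleC c x) = scaleC c (T x)"
  by (simp add: lin_op_def)

lemma lin_op_0: "lin_op D T \<Longrightarrow> T 0 = 0"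
  using lin_op_scaleC[of D T 0 0] csubspace_0[OF lin_op_sub] by fastforce

lemma lin_op_uminus: "lin_op D T \<Longrightarrow> x \<in> D \<Longrightarrow> T (- x) = - T x"
  using lin_op_scaleC[of D T x "-1"] by (simp add: scaleC_minus_left scaleC_one)

lemma lin_op_diff: "lin_op D T \<Longrightarrow> x \<in> D \<Longrightarrow> y \<in> D \<Longrightarrow> T (x - y) = T x - T y"
  using lin_op_add[of D T x "-y"] lin_op_uminus[of D T y] csubspace_uminus[OF lin_op_sub, of D T y]
  by simp

lemma lin_op_scaleR: "lin_op D T \<Longrightarrow> x \<in> D \<Longrightarrow> T (scaleR r x) = scaleR r (T x)"
  by (simp add: lin_op_scaleC scaleR_scaleC)

lemma lin_op_sum: "lin_op D T \<Longrightarrow> (\<And>i. i \<in> A \<Longrightarrow> f i \<in> D) \<Longrightarrow> T (sum f A) = (\<Sum>i\<in>A. T (f i))"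
proof (induction A rule: infinite_finite_induct)
  case (infinite A) then show ?case using lin_op_0 by simp
next
  case empty then show ?case using lin_op_0 by simp
next
  case (insert x F)
  then show ?case
    using lin_op_add[of D T "f x" "sum f F"] csubspace_sum[OF lin_op_sub[OF insert.prems(1)], of F f]
    by simp
qed

lemma graph_csubspace:
  assumes "lin_op D T"
  shows "csubspace (graph D T)"
proof -
  have S: "csubspace D" using assms lin_op_sub by blast
  have "(0, 0) \<in> graph D T"
    using csubspace_0[OF S] lin_op_0[OF assms] by (auto simp: graph_def intro!: exI[of _ 0])
  moreover have "p + q \<in> graph D T" if hpq: "p \<in> graph D T" "q \<in> graph D T" for p q
  proof -
    obtain x where "x \<in> D" "p = (x, T x)" using hpq(1) unfolding graph_def by blast
    moreover obtain y where "y \<in> D" "q = (y, T y)" using hpq(2) unfolding graph_def by blast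
    ultimately show ?thesis using lin_op_add[OF assms] csubspace_add[OF S] by (auto simp: graph_def)
  qed
  moreover have "scaleC c p \<in> graph D T" if hp: "p \<in> graph D T" for p c
  proof -
    obtain x where "x \<in> D" "p = (x, T x)" using hp unfolding graph_def by blast
    then show ?thesis using lin_op_scaleC[OF assms] csubspace_scaleC[OF S]
      by (auto simp: graph_def scaleC_prod_def)
  qed
  ultimately show ?thesis by (simp add: csubspace_def zero_prod_def)
qed

lemma graph_limit:
  fixes D :: "'a::chilbert set" and T :: "'a \<Rightarrow> 'b::chilbert"
  assumes "closed (graph D T)" "\<And>n. x n \<in> D" "x \<longlonglongrightarrow> a" "(\<lambda>n. T (x n)) \<longlonglongrightarrow> b"
  shows "a \<in> D \<and> T a = b"
proof -
  have "(\<lambda>n. (x n, T (x n))) \<longlonglongrightarrow> (a, b)" using assms by (intro tendsto_Pair)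
  moreover have "\<forall>n. (x n, T (x n)) \<in> graph D T" using assms by (auto simp: graph_def)
  ultimately have "(a, b) \<in> graph D T"
    using closed_sequential_limits[THEN iffD1, OF assms(1), rule_format, of "\<lambda>n. (x n, T (x n))" "(a, b)"]
    by blast
  then show ?thesis by (auto simp: graph_def)
qed

lemma orth_dense_zero:
  fixes D :: "'a::complex_inner set"
  assumes "closure D = UNIV" "\<And>x. x \<in> D \<Longrightarrow> cinner x w = 0"
  shows "w = 0"
proof -
  have "closed {x. cinner x w = 0}"
    by (intro closed_Collect_eq continuous_intros)
  moreover have "D \<subseteq> {x. cinner x w = 0}" using assms by auto
  ultimately have "closure D \<subseteq> {x. cinner x w = 0}" by (rule closure_minimal[rotated])
  then have "cinner w w = 0" using assms by blast
  then show ?thesis by simp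
qed

lemma adj_unique:
  fixes D :: "'a::complex_inner set"
  assumes "closure D = UNIV" "\<And>x. x \<in> D \<Longrightarrow> cinner x z1 = cinner x z2"
  shows "z1 = z2"
  using orth_dense_zero[OF assms(1), of "z1 - z2"] assms(2) by (simp add: cinner_diff_right)

lemma adj_char:
  fixes D :: "'a::chilbert set" and T :: "'a \<Rightarrow> 'b::chilbert"
  assumes "closure D = UNIV" "y \<in> adj_dom D T" "x \<in> D"
  shows "cinner (T x) y = cinner x (adj D T y)"
proof -
  obtain z0 where z0: "\<forall>x\<in>D. cinner (T x) y = cinner x z0"
    using assms(2) unfolding adj_dom_def by blast
  have ex: "\<exists>!z. \<forall>x\<in>D. cinner (T x) y = cinner x z"
  proof (rule ex1I[of _ z0])
    show "\<forall>x\<in>D. cinner (T x) y = cinner x z0" by (rule z0)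
    fix z assume "\<forall>x\<in>D. cinner (T x) y = cinner x z"
    then show "z = z0" using z0 adj_unique[OF assms(1), of z z0] by simp
  qed
  have "\<forall>x\<in>D. cinner (T x) y = cinner x (THE z. \<forall>x\<in>D. cinner (T x) y = cinner x z)"
    by (rule theI'[OF ex])
  then show ?thesis using assms by (simp add: adj_def)
qed

lemma adj_eqI:
  fixes D :: "'a::chilbert set" and T :: "'a \<Rightarrow> 'b::chilbert"
  assumes "closure D = UNIV" "\<And>x. x \<in> D \<Longrightarrow> cinner (T x) y = cinner x z"
  shows "y \<in> adj_dom D T" "adj D T y = z"
proof -
  show yd: "y \<in> adj_dom D T" using assms by (auto simp: adj_dom_def)
  show "adj D T y = z"
    using adj_unique[OF assms(1)] adj_char[OF assms(1) yd] assms(2) by metis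
qed

lemma adj_lin:
  fixes D :: "'a::chilbert set" and T :: "'a \<Rightarrow> 'b::chilbert"
  assumes dn: "closure D = UNIV"
  shows "lin_op (adj_dom D T) (adj D T)"
proof -
  have add: "y1 + y2 \<in> adj_dom D T \<and> adj D T (y1 + y2) = adj D T y1 + adj D T y2"
    if "y1 \<in> adj_dom D T" "y2 \<in> adj_dom D T" for y1 y2
    using adj_eqI[OF dn, of T "y1 + y2" "adj D T y1 + adj D T y2"] adj_char[OF dn that(1)]
      adj_char[OF dn that(2)] by (simp add: cinner_add_right)
  have sc: "scaleC c y \<in> adj_dom D T \<and> adj D T (scaleC c y) = scaleC c (adj D T y)"
    if "y \<in> adj_dom D T" for y c
    using adj_eqI[OF dn, of T "scaleC c y" "scaleC c (adj D T y)"] adj_char[OF dn that]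
    by (simp add: cinner_scaleC_right)
  have z: "0 \<in> adj_dom D T"
    using adj_eqI[OF dn, of T 0 0] by simp
  show ?thesis using add sc z by (auto simp: lin_op_def csubspace_def)
qed

section \<open>Positive contractions\<close>

definition pc :: "('a::complex_inner \<Rightarrow> 'a) \<Rightarrow> bool" where
  "pc X \<longleftrightarrow> (\<forall>x y. X (x + y) = X x + X y) \<and> (\<forall>c x. X (scaleC c x) = scaleC c (X x))
     \<and> (\<forall>x y. cinner (X x) y = cinner x (X y)) \<and> (\<forall>x. (norm (X x))^2 \<le> Re (cinner (X x) x))"

section \<open>The operator A = (I + T*T)^(-1)\<close>

locale cdd =
  fixes D :: "'a::chilbert set" and T :: "'a \<Rightarrow> 'b::chilbert"
  assumes dd: "densely_defined D T" and clo: "closed_op D T"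
begin

lemma linT: "lin_op D T" using dd by (simp add: densely_defined_def)
lemma subD: "csubspace D" using linT by (rule lin_op_sub)
lemma dense: "closure D = UNIV" using dd by (simp add: densely_defined_def)
lemma grcl: "closed (graph D T)" using clo by (simp add: closed_op_def)

abbreviation "DTs \<equiv> adj_dom D T"
abbreviation "Ts \<equiv> adj D T"
definition "DP = {x \<in> D. T x \<in> DTs}"
definition "P x = Ts (T x)"

lemma DP_comp: "comp_dom DTs Ts D T = DP"
  by (simp add: comp_dom_def DP_def)

lemma linTs: "lin_op DTs Ts" using adj_lin[OF dense] .

lemma P_char:
  assumes "x \<in> DP" "w \<in> D"
  shows "cinner (T w) (T x) = cinner w (P x)"
proof -
  have "T x \<in> DTs" using assms by (simp add: DP_def)
  from adj_char[OF dense this assms(2)] show ?thesis by (simp add: P_def)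
qed

lemma DP_sub: "csubspace DP"
proof -
  have STs: "csubspace DTs" using lin_op_sub[OF linTs] .
  have "x + y \<in> DP" if "x \<in> DP" "y \<in> DP" for x y
  proof -
    from that have "x \<in> D" "y \<in> D" "T x \<in> DTs" "T y \<in> DTs" by (auto simp: DP_def)
    then show ?thesis using csubspace_add[OF subD] csubspace_add[OF STs] lin_op_add[OF linT]
      by (simp add: DP_def)
  qed
  moreover have "scaleC c x \<in> DP" if "x \<in> DP" for x c
  proof -
    from that have "x \<in> D" "T x \<in> DTs" by (auto simp: DP_def)
    then show ?thesis using csubspace_scaleC[OF subD] csubspace_scaleC[OF STs] lin_op_scaleC[OF linT]
      by (simp add: DP_def)
  qed
  moreover have "0 \<in> DP"
    using csubspace_0[OF subD] csubspace_0[OF STs] lin_op_0[OF linT] by (simp add: DP_def)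
  ultimately show ?thesis by (auto simp: csubspace_def)
qed

lemma DP_D: "x \<in> DP \<Longrightarrow> x \<in> D" by (simp add: DP_def)

lemma linP: "lin_op DP P"
proof -
  have "P (x + y) = P x + P y" if "x \<in> DP" "y \<in> DP" for x y
  proof -
    from that have "x \<in> D" "y \<in> D" "T x \<in> DTs" "T y \<in> DTs" by (auto simp: DP_def)
    then show ?thesis using lin_op_add[OF linT] lin_op_add[OF linTs] by (simp add: P_def)
  qed
  moreover have "P (scaleC c x) = scaleC c (P x)" if "x \<in> DP" for x c
  proof -
    from that have "x \<in> D" "T x \<in> DTs" by (auto simp: DP_def)
    then show ?thesis using lin_op_scaleC[OF linT] lin_op_scaleC[OF linTs] by (simp add: P_def)
  qed
  ultimately show ?thesis using DP_sub by (simp add: lin_op_def)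
qed

lemma P_self: "x \<in> DP \<Longrightarrow> cinner x (P x) = complex_of_real ((norm (T x))^2)"
  using P_char[of x x] DP_D by (simp add: cinner_self_eq)

lemma vonNeumann: "\<exists>u\<in>DP. u + P u = h"
proof -
  have sub: "csubspace (graph D T)" using graph_csubspace[OF linT] .
  obtain p where p: "p \<in> graph D T" "\<And>m. m \<in> graph D T \<Longrightarrow> cinner ((h, 0) - p) m = 0"
    using proj_exists[OF sub grcl, of "(h, 0)"] by blast
  then obtain u where u: "u \<in> D" "p = (u, T u)" by (auto simp: graph_def)
  have "cinner (h - u) x - cinner (T u) (T x) = 0" if "x \<in> D" for x
    using p(2)[of "(x, T x)"] that u by (simp add: graph_def cinner_Pair cinner_minus_left)
  then have "cinner (T x) (T u) = cinner x (h - u)" if "x \<in> D" for x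
    using that by (metis cinner_commute eq_iff_diff_eq_0)
  then have "T u \<in> DTs" "Ts (T u) = h - u" using adj_eqI[OF dense] by blast+
  then show ?thesis using u by (intro bexI[of _ u]) (auto simp: DP_def P_def)
qed

lemma IP_inj:
  assumes "u \<in> DP" "v \<in> DP" "u + P u = v + P v"
  shows "u = v"
proof -
  define w where "w = u - v"
  have w: "w \<in> DP" using assms DP_sub csubspace_diff by (simp add: w_def)
  have "P w = P u - P v" using assms linP lin_op_diff by (simp add: w_def)
  then have "w + P w = (u + P u) - (v + P v)" by (simp add: w_def algebra_simps)
  then have "w + P w = 0" using assms(3) by simp
  then have "cinner w (w + P w) = 0" by simp
  then have "complex_of_real ((norm w)^2 + (norm (T w))^2) = 0"
    using P_self[OF w] by (simp add: cinner_add_right cinner_self_eq)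
  then have "(norm w)^2 + (norm (T w))^2 = 0" by (simp only: of_real_eq_0_iff)
  then have "norm w = 0" by (metis add_nonneg_eq_0_iff zero_le_power2 power_eq_0_iff zero_neq_numeral)
  then show ?thesis by (simp add: w_def)
qed

definition A :: "'a \<Rightarrow> 'a" where "A h = (THE u. u \<in> DP \<and> u + P u = h)"

lemma A_prop: "A h \<in> DP \<and> A h + P (A h) = h"
proof -
  have "\<exists>!u. u \<in> DP \<and> u + P u = h" using vonNeumann IP_inj by metis
  then show ?thesis unfolding A_def by (rule theI')
qed

lemma A_DP: "A h \<in> DP" using A_prop by blast
lemma A_eq: "A h + P (A h) = h" using A_prop by blast
lemma A_D: "A h \<in> D" using A_DP DP_D by blast

lemma A_unique: "u \<in> DP \<Longrightarrow> A (u + P u) = u"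
  using IP_inj A_prop by blast

lemma range_A: "range A = DP"
  using A_DP A_unique by (metis image_subsetI subsetI subset_antisym rangeI)

lemma A_add: "A (x + y) = A x + A y"
proof -
  have "A x + A y \<in> DP" using A_DP DP_sub csubspace_add by blast
  moreover have "(A x + A y) + P (A x + A y) = x + y"
  proof -
    have "P (A x + A y) = P (A x) + P (A y)" using lin_op_add[OF linP A_DP A_DP] .
    then have "(A x + A y) + P (A x + A y) = (A x + P (A x)) + (A y + P (A y))"
      by (simp add: algebra_simps)
    then show ?thesis using A_eq by simp
  qed
  ultimately show ?thesis using A_unique by metis
qed

lemma A_scaleC: "A (scaleC c x) = scaleC c (A x)"
proof -
  have "scaleC c (A x) \<in> DP" using A_DP DP_sub csubspace_scaleC by blast
  moreover have "scaleC c (A x) + P (scaleC c (A x)) = scaleC c x"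
    using lin_op_scaleC[OF linP A_DP] A_eq[of x] scaleC_add_right[of c "A x" "P (A x)"] by simp
  ultimately show ?thesis using A_unique by metis
qed

lemma A_inner: "cinner (A h) g = cinner (A h) (A g) + cinner (T (A h)) (T (A g))"
proof -
  have "cinner (A h) g = cinner (A h) (A g + P (A g))" using A_eq by simp
  also have "\<dots> = cinner (A h) (A g) + cinner (A h) (P (A g))" by (simp add: cinner_add_right)
  also have "cinner (A h) (P (A g)) = cinner (T (A h)) (T (A g))"
    using P_char[OF A_DP A_D] by simp
  finally show ?thesis .
qed

lemma A_selfadj: "cinner (A h) g = cinner h (A g)"
proof -
  have "cinner h (A g) = cnj (cinner (A g) h)" by (rule cinner_commute)
  also have "\<dots> = cnj (cinner (A g) (A h)) + cnj (cinner (T (A g)) (T (A h)))"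
    by (simp add: A_inner[of g h])
  also have "\<dots> = cinner (A h) (A g) + cinner (T (A h)) (T (A g))"
    by (simp only: cinner_commute[of "A h" "A g"] cinner_commute[of "T (A h)" "T (A g)"])
  finally show ?thesis using A_inner[of h g] by simp
qed

lemma A_pc: "pc A"
proof -
  have "(norm (A x))^2 \<le> Re (cinner (A x) x)" for x
    using A_inner[of x x] by (simp add: cinner_self_eq)
  then show ?thesis unfolding pc_def using A_add A_scaleC A_selfadj by blast
qed

lemma P_0: "P 0 = 0"
  using linP lin_op_0 by blast

lemma A_inj: "A h = 0 \<Longrightarrow> h = 0"
  using A_eq[of h] P_0 by simp

end


section \<open>Coefficients of the square root series\<close>

definition csq :: "nat \<Rightarrow> real" where "csq n = (-1)^n * ((1/2::real) gchoose n)"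

lemma csq_0 [simp]: "csq 0 = 1" by (simp add: csq_def)
lemma csq_1 [simp]: "csq (Suc 0) = - 1/2" by (simp add: csq_def)

lemma gchoose_Suc_rec: "(a::real) gchoose (Suc n) = (a gchoose n) * (a - real n) / (real n + 1)"
proof -
  have "fact (Suc n) * (a gchoose Suc n) = (\<Prod>i = 0..<Suc n. a - of_nat i)"
    by (rule gbinomial_mult_fact)
  also have "\<dots> = (\<Prod>i = 0..<n. a - of_nat i) * (a - real n)" by simp
  also have "\<dots> = fact n * (a gchoose n) * (a - real n)" by (simp add: gbinomial_mult_fact)
  finally have h: "fact n * ((real n + 1) * (a gchoose Suc n)) = fact n * ((a gchoose n) * (a - real n))"
    by (simp add: algebra_simps)
  have "(real n + 1) * (a gchoose Suc n) = (a gchoose n) * (a - real n)"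
    by (metis h mult_left_cancel fact_nonzero)
  moreover have "real n + 1 > 0" by simp
  ultimately show ?thesis by (simp add: field_simps)
qed

lemma csq_Suc: "csq (Suc n) = csq n * ((real n - 1/2) / (real n + 1))"
  by (simp add: csq_def gchoose_Suc_rec field_simps)

lemma csq_nonpos: "n \<ge> 1 \<Longrightarrow> csq n \<le> 0"
proof (induction n rule: dec_induct)
  case base then show ?case by simp
next
  case (step n)
  have "(real n - 1/2) / (real n + 1) \<ge> 0" using step.hyps by simp
  then show ?case using step.IH by (simp only: csq_Suc) (rule mult_nonpos_nonneg)
qed

definition ps :: "nat \<Rightarrow> real" where "ps m = (\<Sum>k\<le>m. csq k)"

lemma ps_eq: "ps m = (1 - 2 * real m) * csq m"
proof (induction m)
  case 0 then show ?case by (simp add: ps_def)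
next
  case (Suc m)
  have "ps (Suc m) = ps m + csq (Suc m)" by (simp add: ps_def)
  also have "\<dots> = (1 - 2 * real m) * csq m + csq m * ((real m - 1/2) / (real m + 1))"
    using Suc by (simp add: csq_Suc)
  also have "\<dots> = (1 - 2 * real (Suc m)) * csq (Suc m)"
    by (simp add: csq_Suc field_simps)
  finally show ?case .
qed

lemma ps_Suc: "ps (Suc m) = ps m * ((2 * real m + 1) / (2 * real m + 2))"
  by (simp add: ps_eq csq_Suc field_simps)

lemma ps_nonneg: "ps m \<ge> 0"
proof (induction m)
  case 0 then show ?case by (simp add: ps_def)
next
  case (Suc m)
  have "(2 * real m + 1) / (2 * real m + 2) \<ge> 0" by simp
  then show ?case using Suc.IH by (simp only: ps_Suc) (rule mult_nonneg_nonneg)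
qed

lemma ps_sq: "(ps m)^2 \<le> 1 / (2 * real m + 1)"
proof (induction m)
  case 0 then show ?case by (simp add: ps_def)
next
  case (Suc m)
  have "(ps (Suc m))^2 = (ps m)^2 * ((2 * real m + 1) / (2 * real m + 2))^2"
    by (simp only: ps_Suc power_mult_distrib)
  also have "\<dots> \<le> 1 / (2 * real m + 1) * ((2 * real m + 1) / (2 * real m + 2))^2"
    using Suc by (intro mult_right_mono) auto
  also have "\<dots> = (2 * real m + 1) / (2 * real m + 2)^2"
  proof -
    have gen: "1 / a * (a / b)^2 = a / b^2" if "a \<noteq> 0" for a b :: real
      using that by (simp add: power2_eq_square)
    have "2 * real m + 1 \<noteq> 0" by simp
    from gen[OF this] show ?thesis .
  qed
  also have "\<dots> \<le> 1 / (2 * real (Suc m) + 1)"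
  proof -
    have gen2: "x / y \<le> w / z" if "y > 0" "z > 0" "x * z \<le> w * y" for x y z w :: real
      using that by (subst frac_le_eq) (auto intro: divide_nonpos_pos)
    have "(2 * real m + 1) * (2 * real (Suc m) + 1) \<le> 1 * (2 * real m + 2)^2"
      by (simp add: power2_eq_square algebra_simps)
    then show ?thesis by (intro gen2) auto
  qed
  finally show ?case .
qed

lemma ps_tendsto: "ps \<longlonglongrightarrow> 0"
proof -
  have "(\<lambda>m. (ps m)^2) \<longlonglongrightarrow> 0"
  proof (rule tendsto_sandwich[of "\<lambda>_. 0" _ _ "\<lambda>m. 1 / (real m + 1)"])
    show "\<forall>\<^sub>F n in sequentially. 0 \<le> (ps n)^2" by simp
    show "\<forall>\<^sub>F n in sequentially. (ps n)^2 \<le> 1 / (real n + 1)"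
    proof (intro always_eventually allI)
      fix n
      have "1 / (2 * real n + 1) \<le> 1 / (real n + 1)" by (simp add: field_simps)
      then show "(ps n)^2 \<le> 1 / (real n + 1)" using ps_sq[of n] by linarith
    qed
    show "(\<lambda>n. 1 / (real n + 1)) \<longlonglongrightarrow> 0"
      using LIMSEQ_inverse_real_of_nat by (simp add: inverse_eq_divide add.commute)
  qed simp
  then have "(\<lambda>m. sqrt ((ps m)^2)) \<longlonglongrightarrow> sqrt 0" by (intro tendsto_intros)
  then show ?thesis using ps_nonneg by simp
qed

lemma abs_csq_sum: "(\<Sum>k\<le>m. \<bar>csq k\<bar>) = 2 - ps m"
proof (induction m)
  case 0 then show ?case by (simp add: ps_def)
next
  case (Suc m)
  have "\<bar>csq (Suc m)\<bar> = - csq (Suc m)" using csq_nonpos[of "Suc m"] by simp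
  then show ?case using Suc by (simp add: ps_def)
qed

lemma summable_abs_csq: "summable (\<lambda>n. \<bar>csq n\<bar>)"
proof (rule summableI_nonneg_bounded[where x = 2])
  fix n
  show "(\<Sum>i<n. \<bar>csq i\<bar>) \<le> 2"
  proof (cases n)
    case 0 then show ?thesis by simp
  next
    case (Suc m)
    then have "(\<Sum>i<n. \<bar>csq i\<bar>) = (\<Sum>i\<le>m. \<bar>csq i\<bar>)" by (simp add: lessThan_Suc_atMost)
    then show ?thesis using abs_csq_sum ps_nonneg by simp
  qed
qed simp

lemma abs_csq_partial_le: "(\<Sum>i<n. \<bar>csq i\<bar>) \<le> 2"
proof (cases n)
  case 0 then show ?thesis by simp
next
  case (Suc m)
  then have "(\<Sum>i<n. \<bar>csq i\<bar>) = (\<Sum>i\<le>m. \<bar>csq i\<bar>)" by (simp add: lessThan_Suc_atMost)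
  then show ?thesis using abs_csq_sum ps_nonneg by simp
qed

lemma suminf_abs_csq_le: "(\<Sum>n. \<bar>csq n\<bar>) \<le> 2"
  using suminf_le_const[OF summable_abs_csq abs_csq_partial_le] .

lemma summable_csq: "summable csq"
  using summable_abs_csq summable_rabs_cancel by blast

lemma csq_sums: "csq sums 0"
proof -
  have "(\<lambda>m. \<Sum>k<Suc m. csq k) \<longlonglongrightarrow> 0"
  proof -
    have e: "(\<lambda>m. \<Sum>k<Suc m. csq k) = ps" by (simp add: fun_eq_iff ps_def lessThan_Suc_atMost)
    show ?thesis unfolding e by (rule ps_tendsto)
  qed
  then have "(\<lambda>n. \<Sum>k<n. csq k) \<longlonglongrightarrow> 0"
    by (rule LIMSEQ_imp_Suc)
  then show ?thesis by (simp add: sums_def)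
qed

lemma suminf_csq: "suminf csq = 0"
  using csq_sums sums_unique by metis

lemma csq_cauchy: "(\<Sum>i\<le>k. csq i * csq (k - i)) = (if k = 0 then 1 else if k = 1 then -1 else 0)"
proof -
  have "(\<Sum>i\<le>k. csq i * csq (k - i)) = (\<Sum>i\<le>k. (-1)^k * (((1/2::real) gchoose i) * ((1/2) gchoose (k - i))))"
  proof (rule sum.cong[OF refl])
    fix i assume "i \<in> {..k}"
    then have "(-1::real)^i * (-1)^(k - i) = (-1)^k" by (simp flip: power_add)
    then show "csq i * csq (k - i) = (-1)^k * (((1/2::real) gchoose i) * ((1/2) gchoose (k - i)))"
      by (simp add: csq_def algebra_simps)
  qed
  also have "\<dots> = (-1)^k * (\<Sum>i\<in>{0..k}. ((1/2::real) gchoose i) * ((1/2) gchoose (k - i)))"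
    by (simp add: sum_distrib_left atMost_atLeast0)
  also have "\<dots> = (-1)^k * ((1::real) gchoose k)"
    using gbinomial_Vandermonde[of "1/2::real" "1/2" k] by simp
  also have "\<dots> = (-1)^k * real (1 choose k)"
    using binomial_gbinomial[of 1 k, where 'a = real] by simp
  also have "\<dots> = (if k = 0 then 1 else if k = 1 then -1 else 0)"
    by (cases k) (auto simp: binomial_eq_0)
  finally show ?thesis .
qed

lemma pcD:
  assumes "pc X"
  shows "X (x + y) = X x + X y" "X (scaleC c x) = scaleC c (X x)"
    "cinner (X x) y = cinner x (X y)" "(norm (X x))^2 \<le> Re (cinner (X x) x)"
  using assms by (auto simp: pc_def)

lemma pc_norm:
  assumes "pc X"
  shows "norm (X x) \<le> norm x"
proof (cases "norm (X x) = 0")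
  case True then show ?thesis by simp
next
  case False
  have "(norm (X x))^2 \<le> Re (cinner (X x) x)" using pcD(4)[OF assms] .
  also have "\<dots> \<le> cmod (cinner (X x) x)" by (rule complex_Re_le_cmod)
  also have "\<dots> \<le> norm (X x) * norm x" by (rule cauchy_schwarz_c)
  finally have "norm (X x) * norm (X x) \<le> norm (X x) * norm x" by (simp add: power2_eq_square)
  then show ?thesis using False by (simp add: mult_le_cancel_left)
qed

lemma pc_bounded_linear:
  assumes "pc X"
  shows "bounded_linear X"
  by (rule bounded_linear_intro[of _ 1])
     (auto simp: pcD[OF assms] scaleR_scaleC pc_norm[OF assms])

lemma pc_Re_nonneg:
  assumes "pc X"
  shows "0 \<le> Re (cinner (X x) x)"
  using pcD(4)[OF assms, of x] by (metis zero_le_power2 order_trans)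

lemma pc_Re_le:
  assumes "pc X"
  shows "Re (cinner (X x) x) \<le> (norm x)^2"
proof -
  have "Re (cinner (X x) x) \<le> cmod (cinner (X x) x)" by (rule complex_Re_le_cmod)
  also have "\<dots> \<le> norm (X x) * norm x" by (rule cauchy_schwarz_c)
  also have "\<dots> \<le> norm x * norm x" using pc_norm[OF assms] by (intro mult_right_mono) auto
  finally show ?thesis by (simp add: power2_eq_square)
qed

lemma pc_compl:
  assumes "pc X"
  shows "pc (\<lambda>v. v - X v)"
  unfolding pc_def
proof (intro conjI allI)
  fix x y :: 'a and c
  show "x + y - X (x + y) = x - X x + (y - X y)" by (simp add: pcD[OF assms])
  show "scaleC c x - X (scaleC c x) = scaleC c (x - X x)" by (simp add: pcD[OF assms] scaleC_diff_right)
  show "cinner (x - X x) y = cinner x (y - X y)"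
    by (simp add: cinner_diff_left cinner_diff_right pcD[OF assms])
  have r: "Re (cinner x (X x)) = Re (cinner (X x) x)" by (rule Re_cinner_commute)
  have "(norm (x - X x))^2 = (norm x)^2 + (norm (X x))^2 - 2 * Re (cinner x (X x))"
    by (rule norm_diff_sq)
  also have "\<dots> \<le> (norm x)^2 - Re (cinner (X x) x)" using pcD(4)[OF assms, of x] r by linarith
  also have "\<dots> = Re (cinner (x - X x) x)" by (simp add: cinner_diff_left norm_sq_cinner)
  finally show "(norm (x - X x))^2 \<le> Re (cinner (x - X x) x)" .
qed

lemma pc_funpow:
  assumes "pc X"
  shows "(X^^n) (x + y) = (X^^n) x + (X^^n) y" "(X^^n) (scaleC c x) = scaleC c ((X^^n) x)"
    "cinner ((X^^n) x) y = cinner x ((X^^n) y)" "norm ((X^^n) x) \<le> norm x"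
proof -
  show "(X^^n) (x + y) = (X^^n) x + (X^^n) y"
    by (induction n) (auto simp: pcD[OF assms])
  show "(X^^n) (scaleC c x) = scaleC c ((X^^n) x)"
    by (induction n) (auto simp: pcD[OF assms])
  show "cinner ((X^^n) x) y = cinner x ((X^^n) y)"
  proof (induction n arbitrary: x y)
    case 0 then show ?case by simp
  next
    case (Suc n)
    have "cinner ((X^^Suc n) x) y = cinner ((X^^n) x) (X y)"
      by (simp add: pcD(3)[OF assms])
    also have "\<dots> = cinner x ((X^^n) (X y))" by (rule Suc.IH)
    also have "(X^^n) (X y) = (X^^Suc n) y" by (simp add: funpow_swap1)
    finally show ?case .
  qed
  show "norm ((X^^n) x) \<le> norm x"
    by (induction n) (auto intro: order_trans[OF pc_norm[OF assms]])
qed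

lemma bounded_linear_funpow:
  fixes X :: "'a::real_normed_vector \<Rightarrow> 'a"
  assumes "bounded_linear X"
  shows "bounded_linear (X^^n)"
proof (induction n)
  case 0
  have e: "X^^0 = (\<lambda>x. x)" by (simp add: fun_eq_iff)
  show ?case unfolding e by (rule bounded_linear_ident)
next
  case (Suc n)
  then show ?case using bounded_linear_compose[OF assms Suc] by (simp add: o_def)
qed

lemma pc_funpow_split:
  "(X^^(2*k)) x = (X^^k) ((X^^k) x)" "(X^^(Suc (2*k))) x = (X^^k) (X ((X^^k) x))"
proof -
  show "(X^^(2*k)) x = (X^^k) ((X^^k) x)" by (simp add: mult_2 funpow_add)
  have "X^^(Suc (2*k)) = X^^(k + Suc k)" by (simp add: mult_2)
  also have "\<dots> = X^^k \<circ> X^^(Suc k)" by (rule funpow_add)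
  finally have "X^^(Suc (2*k)) = X^^k \<circ> X^^(Suc k)" .
  then show "(X^^(Suc (2*k))) x = (X^^k) (X ((X^^k) x))" by (simp add: funpow_swap1)
qed

lemma pc_funpow_Re:
  assumes "pc X"
  shows "0 \<le> Re (cinner ((X^^n) x) x)" "Re (cinner ((X^^n) x) x) \<le> (norm x)^2"
    "Re (cinner ((X^^Suc n) x) x) \<le> Re (cinner ((X^^n) x) x)"
proof -
  obtain k where k: "n = 2 * k \<or> n = Suc (2 * k)"
  proof (cases "even n")
    case True then show ?thesis using that by (auto elim: evenE)
  next
    case False
    then obtain b where "n = 2 * b + 1" by (auto elim: oddE)
    then show ?thesis using that[of b] by simp
  qed
  define z where "z = (X^^k) x"
  have nz: "norm z \<le> norm x" using pc_funpow(4)[OF assms] by (simp add: z_def)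
  have sq: "(norm z)^2 \<le> (norm x)^2" using nz by (simp add: power_mono)
  have ev: "Re (cinner ((X^^(2*k)) x) x) = (norm z)^2"
    by (simp add: pc_funpow_split pc_funpow(3)[OF assms] z_def norm_sq_cinner)
  have "cinner ((X^^Suc (2*k)) x) x = cinner ((X^^k) (X ((X^^k) x))) x"
    by (simp only: pc_funpow_split)
  also have "\<dots> = cinner (X z) z" unfolding z_def by (rule pc_funpow(3)[OF assms])
  finally have od: "Re (cinner ((X^^Suc (2*k)) x) x) = Re (cinner (X z) z)" by simp
  have ev2: "Re (cinner ((X^^(2*k + 2)) x) x) = (norm (X z))^2"
  proof -
    have "X^^(2*k+2) = X^^(k + Suc (Suc k))" by (simp add: mult_2)
    also have "\<dots> = X^^k \<circ> X^^(Suc (Suc k))" by (rule funpow_add)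
    finally have "X^^(2*k+2) = X^^k \<circ> X^^(Suc (Suc k))" .
    then have "(X^^(2*k+2)) x = (X^^k) (X (X ((X^^k) x)))" by (simp add: funpow_swap1)
    then have "cinner ((X^^(2*k+2)) x) x = cinner (X (X z)) z"
      by (simp add: pc_funpow(3)[OF assms] z_def)
    also have "\<dots> = cinner (X z) (X z)" by (simp add: pcD(3)[OF assms])
    finally show ?thesis by (simp add: norm_sq_cinner)
  qed
  have pz: "0 \<le> Re (cinner (X z) z)" "Re (cinner (X z) z) \<le> (norm z)^2"
    "(norm (X z))^2 \<le> Re (cinner (X z) z)"
    using pc_Re_nonneg[OF assms] pc_Re_le[OF assms] pcD(4)[OF assms] by auto
  have compl: "Re (cinner (X z) z) \<le> (norm z)^2" using pz by simp
  from k show "0 \<le> Re (cinner ((X^^n) x) x)"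
    using ev od pz by auto
  from k have "Re (cinner ((X^^n) x) x) \<le> (norm z)^2"
    using ev od pz by auto
  then show "Re (cinner ((X^^n) x) x) \<le> (norm x)^2"
    using sq by linarith
  from k show "Re (cinner ((X^^Suc n) x) x) \<le> Re (cinner ((X^^n) x) x)"
  proof
    assume "n = 2 * k"
    then show ?thesis using ev od compl by simp
  next
    assume n: "n = Suc (2 * k)"
    have "Suc n = 2 * k + 2" using n by simp
    then show ?thesis using n ev2 od pz by simp
  qed
qed


instance chilbert \<subseteq> banach ..

definition bsqrt :: "('a::chilbert \<Rightarrow> 'a) \<Rightarrow> 'a \<Rightarrow> 'a" where
  "bsqrt X x = (\<Sum>n. csq n *\<^sub>R ((\<lambda>v. v - X v)^^n) x)"

context
  fixes X :: "'a::chilbert \<Rightarrow> 'a"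
  assumes pcX: "pc X"
begin

abbreviation "Y \<equiv> (\<lambda>v. v - X v)"

lemma pcY: "pc Y" using pc_compl[OF pcX] .

lemma linY: "lin_op UNIV (Y^^n)"
  by (auto simp: lin_op_def csubspace_UNIV pc_funpow[OF pcY])

lemma term_bound: "norm (csq n *\<^sub>R (Y^^n) x) \<le> \<bar>csq n\<bar> * norm x"
proof -
  have "\<bar>csq n\<bar> * norm ((Y^^n) x) \<le> \<bar>csq n\<bar> * norm x"
    using pc_funpow(4)[OF pcY, of n x] by (rule mult_left_mono) simp
  then show ?thesis by simp
qed

lemma summable_terms: "summable (\<lambda>n. csq n *\<^sub>R (Y^^n) x)"
  by (rule summable_comparison_test'[OF summable_mult2[OF summable_abs_csq, of "norm x"]])
     (rule term_bound)

lemma summable_norm_terms: "summable (\<lambda>n. norm (csq n *\<^sub>R (Y^^n) x))"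
  by (rule summable_comparison_test'[OF summable_mult2[OF summable_abs_csq, of "norm x"]])
     (simp only: real_norm_def abs_norm_cancel term_bound)

lemma bsqrt_add: "bsqrt X (x + y) = bsqrt X x + bsqrt X y"
proof -
  have "bsqrt X x + bsqrt X y = (\<Sum>n. csq n *\<^sub>R (Y^^n) x + csq n *\<^sub>R (Y^^n) y)"
    unfolding bsqrt_def by (rule suminf_add[OF summable_terms summable_terms])
  also have "\<dots> = bsqrt X (x + y)"
    unfolding bsqrt_def by (simp add: pc_funpow(1)[OF pcY] scaleR_add_right)
  finally show ?thesis by simp
qed

lemma bsqrt_scaleC: "bsqrt X (scaleC c x) = scaleC c (bsqrt X x)"
proof -
  have "scaleC c (bsqrt X x) = (\<Sum>n. scaleC c (csq n *\<^sub>R (Y^^n) x))"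
    unfolding bsqrt_def by (rule bounded_linear.suminf[OF bounded_linear_scaleC summable_terms])
  also have "\<dots> = bsqrt X (scaleC c x)"
    unfolding bsqrt_def
    by (simp add: pc_funpow(2)[OF pcY] scaleR_scaleC scaleC_scaleC mult.commute)
  finally show ?thesis by simp
qed

lemma bsqrt_norm: "norm (bsqrt X x) \<le> 2 * norm x"
proof -
  have "norm (bsqrt X x) \<le> (\<Sum>n. norm (csq n *\<^sub>R (Y^^n) x))"
    unfolding bsqrt_def by (rule summable_norm[OF summable_norm_terms])
  also have "\<dots> \<le> (\<Sum>n. \<bar>csq n\<bar> * norm x)"
    by (rule suminf_le[OF term_bound summable_norm_terms summable_mult2[OF summable_abs_csq]])
  also have "\<dots> = (\<Sum>n. \<bar>csq n\<bar>) * norm x"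
    by (rule suminf_mult2[OF summable_abs_csq, symmetric])
  also have "\<dots> \<le> 2 * norm x"
    using suminf_abs_csq_le by (intro mult_right_mono) auto
  finally show ?thesis .
qed

lemma bsqrt_bl: "bounded_linear (bsqrt X)"
proof (rule bounded_linear_intro[of _ 2])
  fix x y :: 'a and r :: real
  show "bsqrt X (x + y) = bsqrt X x + bsqrt X y" by (rule bsqrt_add)
  show "bsqrt X (r *\<^sub>R x) = r *\<^sub>R bsqrt X x" by (simp add: scaleR_scaleC bsqrt_scaleC)
  show "norm (bsqrt X x) \<le> norm x * 2" using bsqrt_norm[of x] by (simp add: mult.commute)
qed

lemma funpow_comm:
  assumes "bounded_linear Z" "\<And>v. Z (X v) = X (Z v)"
  shows "Z ((Y^^n) v) = (Y^^n) (Z v)"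
proof (induction n arbitrary: v)
  case 0 then show ?case by simp
next
  case (Suc n)
  have "Z ((Y^^Suc n) v) = Z ((Y^^n) v) - Z (X ((Y^^n) v))"
    by (simp add: linear_diff[OF bounded_linear.linear[OF assms(1)]])
  also have "\<dots> = (Y^^Suc n) (Z v)" by (simp add: Suc assms(2))
  finally show ?case .
qed

lemma bsqrt_comm:
  assumes "bounded_linear Z" "\<And>v. Z (X v) = X (Z v)"
  shows "Z (bsqrt X x) = bsqrt X (Z x)"
proof -
  have "Z (bsqrt X x) = (\<Sum>n. Z (csq n *\<^sub>R (Y^^n) x))"
    unfolding bsqrt_def by (rule bounded_linear.suminf[OF assms(1) summable_terms])
  also have "\<dots> = bsqrt X (Z x)"
    unfolding bsqrt_def
    by (simp add: linear.scaleR[OF bounded_linear.linear[OF assms(1)]] funpow_comm[OF assms])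
  finally show ?thesis .
qed

lemma bsqrt_selfadj: "cinner (bsqrt X x) y = cinner x (bsqrt X y)"
proof -
  have "cinner (bsqrt X x) y = (\<Sum>n. cinner (csq n *\<^sub>R (Y^^n) x) y)"
    unfolding bsqrt_def
    by (rule bounded_linear.suminf[OF bounded_linear_cinner_left summable_terms])
  also have "\<dots> = (\<Sum>n. cinner x (csq n *\<^sub>R (Y^^n) y))"
    by (simp add: cinner_scaleR_left cinner_scaleR_right pc_funpow(3)[OF pcY])
  also have "\<dots> = cinner x (bsqrt X y)"
    unfolding bsqrt_def
    by (rule bounded_linear.suminf[OF bounded_linear_cinner_right summable_terms, symmetric])
  finally show ?thesis .
qed

lemma bsqrt_Re: "Re (cinner (bsqrt X x) x) = (\<Sum>n. csq n * Re (cinner ((Y^^n) x) x))"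
proof -
  have s: "summable (\<lambda>n. cinner (csq n *\<^sub>R (Y^^n) x) x)"
    by (rule bounded_linear.summable[OF bounded_linear_cinner_left summable_terms])
  have "cinner (bsqrt X x) x = (\<Sum>n. cinner (csq n *\<^sub>R (Y^^n) x) x)"
    unfolding bsqrt_def
    by (rule bounded_linear.suminf[OF bounded_linear_cinner_left summable_terms])
  then have "Re (cinner (bsqrt X x) x) = (\<Sum>n. Re (cinner (csq n *\<^sub>R (Y^^n) x) x))"
    using bounded_linear.suminf[OF bounded_linear_Re s] by simp
  then show ?thesis by (simp add: cinner_scaleR_left)
qed

lemma a_dec: "n \<ge> 1 \<Longrightarrow> Re (cinner ((Y^^n) x) x) \<le> Re (cinner ((Y^^1) x) x)"
proof (induction n rule: dec_induct)
  case base then show ?case by simp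
next
  case (step n)
  then show ?case using pc_funpow_Re(3)[OF pcY, of n x] by linarith
qed

lemma bsqrt_ge: "Re (cinner (X x) x) \<le> Re (cinner (bsqrt X x) x)"
proof -
  define a where "a n = Re (cinner ((Y^^n) x) x)" for n :: nat
  define b where "b n = (if n = 0 then a 0 else a 1)" for n :: nat
  have a0: "a 0 = (norm x)^2" by (simp add: a_def norm_sq_cinner)
  have a1: "a 1 = (norm x)^2 - Re (cinner (X x) x)"
    by (simp add: a_def norm_sq_cinner cinner_diff_left)
  have sa: "summable (\<lambda>n. csq n * a n)"
  proof (rule summable_comparison_test'[OF summable_mult2[OF summable_abs_csq, of "(norm x)^2"]])
    fix n
    have "\<bar>a n\<bar> \<le> (norm x)^2" using pc_funpow_Re(1,2)[OF pcY, of n x] by (simp add: a_def)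
    then show "norm (csq n * a n) \<le> \<bar>csq n\<bar> * (norm x)^2"
      by (simp add: abs_mult mult_left_mono)
  qed
  have sb: "(\<lambda>n. csq n * b n) sums (a 0 - a 1)"
  proof -
    have e: "csq n * b n = a 1 * csq n + (if n = 0 then a 0 - a 1 else 0)" for n
      by (simp add: b_def algebra_simps)
    have "(\<lambda>n. a 1 * csq n) sums (a 1 * 0)" by (rule sums_mult[OF csq_sums])
    moreover have "(\<lambda>n. if n = 0 then a 0 - a 1 else 0) sums (a 0 - a 1)"
      using sums_single[of 0 "\<lambda>_. a 0 - a 1"] by simp
    ultimately show ?thesis unfolding e using sums_add by fastforce
  qed
  have le: "csq n * b n \<le> csq n * a n" for n
  proof (cases "n = 0")
    case True then show ?thesis by (simp add: b_def)
  next
    case False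
    then have "a n \<le> a 1" using a_dec[of n] by (simp add: a_def)
    moreover have "csq n \<le> 0" using False csq_nonpos by simp
    ultimately show ?thesis using False by (simp add: b_def mult_left_mono_neg)
  qed
  have "a 0 - a 1 \<le> (\<Sum>n. csq n * a n)"
    using sums_le[OF le sb summable_sums[OF sa]] .
  then show ?thesis using a0 a1 bsqrt_Re by (simp add: a_def)
qed

lemma bsqrt_pos: "0 \<le> Re (cinner (bsqrt X x) x)"
  using bsqrt_ge pc_Re_nonneg[OF pcX] order_trans by blast

end


context
  fixes X :: "'a::chilbert \<Rightarrow> 'a"
  assumes pcX: "pc X"
begin

abbreviation "Y1 \<equiv> (\<lambda>v. v - X v)"

lemma bsqrt_sq: "bsqrt X (bsqrt X x) = X x"
proof -
  define c where "c = csq"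
  define u where "u k = (Y1^^k) x" for k
  define G where "G i j = (c i * c j) *\<^sub>R u (i + j)" for i j
  define g where "g = (\<lambda>(i,j). G i j)"
  define f where "f = (\<lambda>(i::nat,j::nat). \<bar>c i\<bar> * \<bar>c j\<bar> * norm x)"
  define sN where "sN n v = (\<Sum>i<n. c i *\<^sub>R (Y1^^i) v)" for n v
  let ?B = "bsqrt X"
  let ?S1 = "\<lambda>n::nat. {..<n} \<times> {..<n}"
  let ?S2 = "\<lambda>n::nat. {(i,j). i + j < n}"
  have pcY: "pc Y1" using pc_compl[OF pcX] .
  have lY: "lin_op UNIV (Y1^^n)" for n by (rule linY[OF pcX])
  have sNdiff: "sN n (v - w) = sN n v - sN n w" for n v w
    by (simp add: sN_def lin_op_diff[OF lY] scaleR_diff_right sum_subtractf)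
  have sNbound: "norm (sN n v) \<le> 2 * norm v" for n v
  proof -
    have "norm (sN n v) \<le> (\<Sum>i<n. norm (c i *\<^sub>R (Y1^^i) v))" unfolding sN_def by (rule norm_sum)
    also have "\<dots> \<le> (\<Sum>i<n. \<bar>c i\<bar> * norm v)"
      unfolding c_def by (intro sum_mono term_bound[OF pcX])
    also have "\<dots> = (\<Sum>i<n. \<bar>c i\<bar>) * norm v" by (simp add: sum_distrib_right)
    also have "\<dots> \<le> 2 * norm v" using abs_csq_partial_le by (intro mult_right_mono) (auto simp: c_def)
    finally show ?thesis .
  qed
  have sNlim: "(\<lambda>n. sN n v) \<longlonglongrightarrow> ?B v" for v
    unfolding sN_def bsqrt_def c_def by (rule summable_LIMSEQ[OF summable_terms[OF pcX]])
  have sq_eq: "sN n (sN n x) = sum g (?S1 n)" for n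
  proof -
    have "sN n (sN n x) = (\<Sum>i<n. c i *\<^sub>R (Y1^^i) (\<Sum>j<n. c j *\<^sub>R (Y1^^j) x))"
      by (simp add: sN_def)
    also have "\<dots> = (\<Sum>i<n. \<Sum>j<n. G i j)"
    proof (rule sum.cong[OF refl])
      fix i
      have "(Y1^^i) (\<Sum>j<n. c j *\<^sub>R (Y1^^j) x) = (\<Sum>j<n. c j *\<^sub>R (Y1^^i) ((Y1^^j) x))"
        by (simp add: lin_op_sum[OF lY] lin_op_scaleR[OF lY])
      also have "\<dots> = (\<Sum>j<n. c j *\<^sub>R u (i + j))" by (simp add: u_def funpow_add)
      finally show "c i *\<^sub>R (Y1^^i) (\<Sum>j<n. c j *\<^sub>R (Y1^^j) x) = (\<Sum>j<n. G i j)"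
        by (simp add: G_def scaleR_sum_right)
    qed
    also have "\<dots> = sum g (?S1 n)" by (simp add: g_def sum.cartesian_product)
    finally show ?thesis .
  qed
  have lim1: "(\<lambda>n. sum g (?S1 n)) \<longlonglongrightarrow> ?B (?B x)"
  proof -
    have e: "sN n (sN n x) - ?B (?B x) = sN n (sN n x - ?B x) + (sN n (?B x) - ?B (?B x))" for n
      by (simp add: sNdiff)
    have t1: "(\<lambda>n. sN n (sN n x - ?B x)) \<longlonglongrightarrow> 0"
    proof (rule Lim_null_comparison)
      show "\<forall>\<^sub>F n in sequentially. norm (sN n (sN n x - ?B x)) \<le> 2 * norm (sN n x - ?B x)"
        using sNbound by (intro always_eventually) blast
      have "(\<lambda>n. norm (sN n x - ?B x)) \<longlonglongrightarrow> 0"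
        by (intro tendsto_norm_zero LIM_zero sNlim)
      then show "(\<lambda>n. 2 * norm (sN n x - ?B x)) \<longlonglongrightarrow> 0"
        by (rule tendsto_mult_right_zero)
    qed
    have t2: "(\<lambda>n. sN n (?B x) - ?B (?B x)) \<longlonglongrightarrow> 0" by (intro LIM_zero sNlim)
    have "(\<lambda>n. sN n (sN n x) - ?B (?B x)) \<longlonglongrightarrow> 0"
      unfolding e by (rule tendsto_add_zero[OF t1 t2])
    then have "(\<lambda>n. sN n (sN n x)) \<longlonglongrightarrow> ?B (?B x)" by (rule LIM_zero_cancel)
    then show ?thesis by (simp add: sq_eq)
  qed
  have S1_mono: "\<And>m n. m \<le> n \<Longrightarrow> ?S1 m \<subseteq> ?S1 n" by auto
  have S2_le_S1: "\<And>n. ?S2 n \<subseteq> ?S1 n" by auto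
  have S1_le_S2: "\<And>n. ?S1 (n div 2) \<subseteq> ?S2 n" by auto
  have finite_S1: "\<And>n. finite (?S1 n)" by simp
  with S2_le_S1 have finite_S2: "\<And>n. finite (?S2 n)" by (rule finite_subset)
  have f_nonneg: "\<And>x. 0 \<le> f x" by (auto simp: f_def)
  then have norm_sum_f: "\<And>A. norm (sum f A) = sum f A"
    unfolding real_norm_def by (simp only: abs_of_nonneg sum_nonneg [rule_format])
  have "(\<lambda>n. (\<Sum>k<n. \<bar>c k\<bar>) * (\<Sum>k<n. \<bar>c k\<bar>) * norm x) \<longlonglongrightarrow> (\<Sum>k. \<bar>c k\<bar>) * (\<Sum>k. \<bar>c k\<bar>) * norm x"
    by (intro tendsto_mult tendsto_const summable_LIMSEQ) (auto simp: c_def summable_abs_csq)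
  moreover have "(\<Sum>k<n. \<bar>c k\<bar>) * (\<Sum>k<n. \<bar>c k\<bar>) * norm x = sum f (?S1 n)" for n
  proof -
    have "sum f (?S1 n) = (\<Sum>i<n. \<Sum>j<n. \<bar>c i\<bar> * \<bar>c j\<bar> * norm x)"
      by (simp add: f_def sum.cartesian_product)
    also have "\<dots> = (\<Sum>i<n. \<bar>c i\<bar> * ((\<Sum>j<n. \<bar>c j\<bar>) * norm x))"
      by (simp add: sum_distrib_left sum_distrib_right mult.assoc)
    also have "\<dots> = (\<Sum>i<n. \<bar>c i\<bar>) * ((\<Sum>j<n. \<bar>c j\<bar>) * norm x)"
      by (simp add: sum_distrib_right)
    finally show ?thesis by (simp add: mult.assoc)
  qed
  ultimately have "(\<lambda>n. sum f (?S1 n)) \<longlonglongrightarrow> (\<Sum>k. \<bar>c k\<bar>) * (\<Sum>k. \<bar>c k\<bar>) * norm x"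
    by simp
  then have "convergent (\<lambda>n. sum f (?S1 n))"
    by (rule convergentI)
  then have Cauchy: "Cauchy (\<lambda>n. sum f (?S1 n))"
    by (rule convergent_Cauchy)
  have "Zfun (\<lambda>n. sum f (?S1 n - ?S2 n)) sequentially"
  proof (rule ZfunI, simp only: eventually_sequentially norm_sum_f)
    fix r :: real
    assume r: "0 < r"
    from CauchyD [OF Cauchy r] obtain N
      where "\<forall>m\<ge>N. \<forall>n\<ge>N. norm (sum f (?S1 m) - sum f (?S1 n)) < r" ..
    then have "\<And>m n. N \<le> n \<Longrightarrow> n \<le> m \<Longrightarrow> norm (sum f (?S1 m - ?S1 n)) < r"
      by (simp only: sum_diff finite_S1 S1_mono)
    then have N: "\<And>m n. N \<le> n \<Longrightarrow> n \<le> m \<Longrightarrow> sum f (?S1 m - ?S1 n) < r"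
      by (simp only: norm_sum_f)
    show "\<exists>N. \<forall>n\<ge>N. sum f (?S1 n - ?S2 n) < r"
    proof (intro exI allI impI)
      fix n
      assume "2 * N \<le> n"
      then have n: "N \<le> n div 2" by simp
      have "sum f (?S1 n - ?S2 n) \<le> sum f (?S1 n - ?S1 (n div 2))"
        by (intro sum_mono2 finite_Diff finite_S1 f_nonneg Diff_mono subset_refl S1_le_S2)
      also have "\<dots> < r"
        using n div_le_dividend by (rule N)
      finally show "sum f (?S1 n - ?S2 n) < r" .
    qed
  qed
  then have "Zfun (\<lambda>n. sum g (?S1 n - ?S2 n)) sequentially"
  proof (rule Zfun_le[rule_format])
    fix n
    have "norm (sum g (?S1 n - ?S2 n)) \<le> sum (\<lambda>p. norm (g p)) (?S1 n - ?S2 n)" by (rule norm_sum)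
    also have "\<dots> \<le> sum f (?S1 n - ?S2 n)"
    proof (rule sum_mono)
      fix p assume "p \<in> ?S1 n - ?S2 n"
      obtain i j where p: "p = (i, j)" by force
      have "norm (u (i + j)) \<le> norm x" using pc_funpow(4)[OF pcY] by (simp add: u_def)
      then have "\<bar>c i * c j\<bar> * norm (u (i + j)) \<le> \<bar>c i * c j\<bar> * norm x"
        by (rule mult_left_mono) simp
      then show "norm (g p) \<le> f p" by (simp add: p g_def G_def f_def abs_mult)
    qed
    also have "\<dots> = norm (sum f (?S1 n - ?S2 n))" by (simp only: norm_sum_f)
    finally show "norm (sum g (?S1 n - ?S2 n)) \<le> norm (sum f (?S1 n - ?S2 n))" .
  qed
  then have 2: "(\<lambda>n. sum g (?S1 n) - sum g (?S2 n)) \<longlonglongrightarrow> 0"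
    unfolding tendsto_Zfun_iff diff_0_right
    by (simp only: sum_diff finite_S1 S2_le_S1)
  with lim1 have lim2: "(\<lambda>n. sum g (?S2 n)) \<longlonglongrightarrow> ?B (?B x)"
    by (rule Lim_transform2)
  define e where "e k = (if k = 0 then 1 else if k = 1 then -1 else (0::real))" for k :: nat
  have tri: "sum g (?S2 n) = (\<Sum>k<n. e k *\<^sub>R u k)" for n
  proof -
    have "sum g (?S2 n) = (\<Sum>k<n. \<Sum>i\<le>k. G i (k - i))"
      unfolding g_def by (rule sum.triangle_reindex)
    also have "\<dots> = (\<Sum>k<n. (\<Sum>i\<le>k. c i * c (k - i)) *\<^sub>R u k)"
      by (intro sum.cong refl) (simp add: G_def scaleR_sum_left)
    also have "\<dots> = (\<Sum>k<n. e k *\<^sub>R u k)"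
      by (simp add: c_def csq_cauchy e_def)
    finally show ?thesis .
  qed
  have ev: "(\<Sum>k<n. e k *\<^sub>R u k) = X x" if "n \<ge> 2" for n
    using that
  proof (induction n rule: dec_induct)
    case base
    have "{..<2::nat} = {0, 1}" by auto
    then show ?case by (simp add: e_def u_def)
  next
    case (step n)
    then show ?case by (simp add: e_def)
  qed
  have "(\<lambda>n. sum g (?S2 n)) \<longlonglongrightarrow> X x"
  proof (rule Lim_transform_eventually[OF tendsto_const])
    show "\<forall>\<^sub>F n in sequentially. X x = sum g (?S2 n)"
      using ev tri by (intro eventually_sequentiallyI[of 2]) simp
  qed
  with lim2 show ?thesis using LIMSEQ_unique by blast
qed

lemma pc_bsqrt: "pc (bsqrt X)"
  unfolding pc_def
proof (intro conjI allI)
  fix x y :: 'a and c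
  show "bsqrt X (x + y) = bsqrt X x + bsqrt X y" by (rule bsqrt_add[OF pcX])
  show "bsqrt X (scaleC c x) = scaleC c (bsqrt X x)" by (rule bsqrt_scaleC[OF pcX])
  show "cinner (bsqrt X x) y = cinner x (bsqrt X y)" by (rule bsqrt_selfadj[OF pcX])
  have "cinner (bsqrt X (bsqrt X x)) x = cinner (bsqrt X x) (bsqrt X x)"
    by (rule bsqrt_selfadj[OF pcX])
  then have "(norm (bsqrt X x))^2 = Re (cinner (X x) x)"
    by (simp add: norm_sq_cinner bsqrt_sq)
  also have "\<dots> \<le> Re (cinner (bsqrt X x) x)" by (rule bsqrt_ge[OF pcX])
  finally show "(norm (bsqrt X x))^2 \<le> Re (cinner (bsqrt X x) x)" .
qed

end


lemma pc_selfadj_real: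
  assumes "pc X"
  shows "cinner (X x) x \<in> \<real>"
proof -
  have "cinner (X x) x = cinner x (X x)" using pcD(3)[OF assms] .
  also have "\<dots> = cnj (cinner (X x) x)" by (rule cinner_commute)
  finally show ?thesis using Reals_cnj_iff by metis
qed

lemma pc_diff:
  assumes "pc X"
  shows "X (x - y) = X x - X y"
  using linear_diff[OF bounded_linear.linear[OF pc_bounded_linear[OF assms]]] .

context cdd
begin

definition "B = bsqrt A"
definition "C = bsqrt (\<lambda>v. v - A v)"

lemma pcIA: "pc (\<lambda>v. v - A v)" using pc_compl[OF A_pc] .
lemma pcB: "pc B" unfolding B_def using pc_bsqrt[OF A_pc] .
lemma pcC: "pc C" unfolding C_def using pc_bsqrt[OF pcIA] .
lemma blA: "bounded_linear A" using pc_bounded_linear[OF A_pc] .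
lemma blB: "bounded_linear B" using pc_bounded_linear[OF pcB] .
lemma blC: "bounded_linear C" using pc_bounded_linear[OF pcC] .

lemma BB: "B (B x) = A x" unfolding B_def using bsqrt_sq[OF A_pc] .
lemma CC: "C (C x) = x - A x" unfolding C_def using bsqrt_sq[OF pcIA] .

lemma AC: "A (C x) = C (A x)"
  unfolding C_def
  by (rule bsqrt_comm[OF pcIA blA]) (simp add: pc_diff[OF A_pc])

lemma comm_B:
  assumes "bounded_linear Z" "\<And>v. Z (A v) = A (Z v)"
  shows "Z (B x) = B (Z x)"
  unfolding B_def by (rule bsqrt_comm[OF A_pc assms])

lemma comm_C:
  assumes "bounded_linear Z" "\<And>v. Z (A v) = A (Z v)"
  shows "Z (C x) = C (Z x)"
  unfolding C_def
proof (rule bsqrt_comm[OF pcIA assms(1)])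
  fix v
  show "Z (v - A v) = Z v - A (Z v)"
    using linear_diff[OF bounded_linear.linear[OF assms(1)]] assms(2) by simp
qed

lemma CB: "C (B x) = B (C x)"
  by (rule comm_B[OF blC]) (simp add: AC)

lemma B_inj: "B x = 0 \<Longrightarrow> x = 0"
  using BB[of x] pc_bounded_linear[OF pcB] A_inj by (simp add: linear_simps)

lemma B_decomp: "y = B (B y) + C (C y)"
  by (simp add: BB CC)

definition "binv y = (THE u. B u = y)"

lemma binv_B: "binv (B u) = u"
proof -
  have "\<exists>!v. B v = B u"
  proof (rule ex1I[of _ u])
    fix v assume "B v = B u"
    then have "B (v - u) = 0" by (simp add: pc_diff[OF pcB])
    from B_inj[OF this] show "v = u" by simp
  qed simp
  then have "B (binv (B u)) = B u" unfolding binv_def by (rule theI')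
  then have "B (binv (B u) - u) = 0" by (simp add: pc_diff[OF pcB])
  from B_inj[OF this] show ?thesis by simp
qed

definition "DS0 = range B"
definition "S0 y = (if y \<in> range B then C (binv y) else 0)"

lemma S0_B: "S0 (B u) = C u" by (simp add: S0_def binv_B)

lemma DS0_sub: "csubspace DS0"
proof -
  have "0 \<in> range B" using pcB by (metis rangeI linear_simps(3) pc_bounded_linear bounded_linear.linear)
  moreover have "B u + B v \<in> range B" for u v by (metis pcD(1)[OF pcB] rangeI)
  moreover have "scaleC c (B u) \<in> range B" for u c by (metis pcD(2)[OF pcB] rangeI)
  ultimately show ?thesis by (auto simp: csubspace_def DS0_def)
qed

lemma S0_lin: "lin_op DS0 S0"
proof -
  have "S0 (B u + B v) = S0 (B u) + S0 (B v)" for u v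
    by (simp add: pcD(1)[OF pcB, symmetric] S0_B pcD(1)[OF pcC])
  moreover have "S0 (scaleC c (B u)) = scaleC c (S0 (B u))" for u c
    by (simp add: pcD(2)[OF pcB, symmetric] S0_B pcD(2)[OF pcC])
  ultimately show ?thesis using DS0_sub by (auto simp: lin_op_def DS0_def)
qed

lemma DS0_dense: "closure DS0 = UNIV"
proof (rule dense_if_orth[OF DS0_sub])
  fix z assume h: "\<And>m. m \<in> DS0 \<Longrightarrow> cinner z m = 0"
  have "cinner (B z) u = 0" for u
    using h[of "B u"] pcD(3)[OF pcB, of z u] by (simp add: DS0_def)
  then have "B z = 0" by (rule cinner_eq_zero_all)
  then show "z = 0" by (rule B_inj)
qed

lemma S0_adj_B: "B w \<in> adj_dom DS0 S0 \<and> adj DS0 S0 (B w) = C w"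
proof -
  have "cinner (S0 x) (B w) = cinner x (C w)" if hx: "x \<in> DS0" for x
  proof -
    obtain u where u: "x = B u" using hx by (auto simp: DS0_def)
    have "cinner (S0 x) (B w) = cinner (C u) (B w)" by (simp add: u S0_B)
    also have "\<dots> = cinner u (C (B w))" by (rule pcD(3)[OF pcC])
    also have "\<dots> = cinner u (B (C w))" by (simp add: CB)
    also have "\<dots> = cinner (B u) (C w)" by (rule pcD(3)[OF pcB, symmetric])
    finally show ?thesis by (simp add: u)
  qed
  then show ?thesis using adj_eqI[OF DS0_dense] by blast
qed

lemma S0_adj_dom: "adj_dom DS0 S0 = DS0"
proof
  show "DS0 \<subseteq> adj_dom DS0 S0" using S0_adj_B by (auto simp: DS0_def)
  show "adj_dom DS0 S0 \<subseteq> DS0"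
  proof
    fix y assume y: "y \<in> adj_dom DS0 S0"
    define z where "z = adj DS0 S0 y"
    have "cinner u (C y) = cinner u (B z)" for u
    proof -
      have "B u \<in> DS0" by (simp add: DS0_def)
      from adj_char[OF DS0_dense y this] have "cinner (C u) y = cinner (B u) z"
        by (simp add: S0_B z_def)
      then show ?thesis by (simp add: pcD(3)[OF pcC] pcD(3)[OF pcB])
    qed
    then have "cinner u (C y - B z) = 0" for u by (simp add: cinner_diff_right)
    then have "C y = B z" using cinner_eq_zero_all' by (metis cinner_commute complex_cnj_zero eq_iff_diff_eq_0)
    then have "y = B (B y) + B (C z)" using B_decomp[of y] CB[of z] by simp
    also have "\<dots> = B (B y + C z)" by (simp add: pcD(1)[OF pcB])
    finally show "y \<in> DS0" by (simp add: DS0_def)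
  qed
qed

lemma S0_selfadj: "self_adjoint DS0 S0"
  unfolding self_adjoint_def densely_defined_def
  using S0_lin DS0_dense S0_adj_dom S0_adj_B S0_B by (auto simp: DS0_def)

lemma S0_pos: "positive_op DS0 S0"
  unfolding positive_op_def
proof
  fix y assume "y \<in> DS0"
  then obtain u where u: "y = B u" by (auto simp: DS0_def)
  define Q where "Q = bsqrt B"
  have pcQ: "pc Q" unfolding Q_def using pc_bsqrt[OF pcB] .
  have QQ: "Q (Q u) = B u" unfolding Q_def using bsqrt_sq[OF pcB] .
  have CQ: "C (Q v) = Q (C v)" for v
    unfolding Q_def by (rule bsqrt_comm[OF pcB blC]) (simp add: CB)
  have "cinner (S0 y) y = cinner (C u) (Q (Q u))" by (simp add: u S0_B QQ)
  also have "\<dots> = cinner (Q (C u)) (Q u)" by (rule pcD(3)[OF pcQ, symmetric])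
  also have "\<dots> = cinner (C (Q u)) (Q u)" by (simp add: CQ)
  finally have e: "cinner (S0 y) y = cinner (C (Q u)) (Q u)" .
  show "cinner (S0 y) y \<in> \<real> \<and> 0 \<le> Re (cinner (S0 y) y)"
    unfolding e using pc_selfadj_real[OF pcC] pc_Re_nonneg[OF pcC] by blast
qed

lemma S0_dom2: "comp_dom DS0 S0 DS0 S0 = DP"
proof -
  have "{x \<in> range B. S0 x \<in> range B} = range A"
  proof (intro equalityI subsetI)
    fix x assume "x \<in> {x \<in> range B. S0 x \<in> range B}"
    then obtain y z where y: "x = B y" and z: "C y = B z" by (auto simp: S0_B)
    have "y = B (B y) + B (C z)" using B_decomp[of y] z CB[of z] by simp
    also have "\<dots> = B (B y + C z)" by (simp add: pcD(1)[OF pcB])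
    finally have "x = A (B y + C z)" using y BB by metis
    then show "x \<in> range A" by simp
  next
    fix x assume "x \<in> range A"
    then obtain v where v: "x = A v" by auto
    then have "x = B (B v)" by (simp add: BB)
    moreover have "S0 x = B (C v)" using v by (simp flip: BB add: S0_B CB)
    ultimately show "x \<in> {x \<in> range B. S0 x \<in> range B}" by simp
  qed
  then show ?thesis by (simp add: comp_dom_def DS0_def range_A)
qed

lemma S0_sq: "x \<in> DP \<Longrightarrow> S0 (S0 x) = P x"
proof -
  assume "x \<in> DP"
  then obtain v where v: "x = A v" using range_A by auto
  have "S0 (S0 x) = S0 (S0 (B (B v)))" by (simp add: v BB)
  also have "\<dots> = C (C v)" by (simp add: S0_B CB)
  also have "\<dots> = v - A v" by (rule CC)
  also have "\<dots> = P x" using A_eq[of v] v by (simp add: algebra_simps)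
  finally show ?thesis .
qed

lemma S0_valid: "is_sqrt_TsT D T DS0 S0"
  unfolding is_sqrt_TsT_def
  using S0_selfadj S0_pos S0_dom2 S0_sq DP_comp
  by (auto simp: S0_def DS0_def P_def)

end


lemma pos_zero:
  fixes W :: "'a::complex_inner \<Rightarrow> 'a"
  assumes add: "\<And>x y. W (x + y) = W x + W y" and scR: "\<And>r x. W (r *\<^sub>R x) = r *\<^sub>R W x"
    and sa: "\<And>x y. cinner (W x) y = cinner x (W y)" and pos: "\<And>x. 0 \<le> Re (cinner (W x) x)"
    and z: "Re (cinner (W y) y) = 0"
  shows "W y = 0"
proof -
  have r0: "Re (cinner (W y) w) = 0" for w
  proof -
    have "- Re (cinner (W y) w) = 0"
    proof (rule quad_aux)
      show "0 \<le> Re (cinner (W w) w)" by (rule pos)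
      fix t :: real
      have "0 \<le> Re (cinner (W (y + t *\<^sub>R w)) (y + t *\<^sub>R w))" by (rule pos)
      also have "\<dots> = Re (cinner (W y) y) + t * Re (cinner (W y) w) + t * Re (cinner (W w) y)
          + t^2 * Re (cinner (W w) w)"
        by (simp add: add scR cinner_add_left cinner_add_right cinner_scaleR_left cinner_scaleR_right
            power2_eq_square algebra_simps)
      also have "Re (cinner (W w) y) = Re (cinner (W y) w)"
        by (simp add: sa Re_cinner_commute[of w])
      finally show "2 * t * (- Re (cinner (W y) w)) \<le> t^2 * Re (cinner (W w) w)"
        using z by simp
    qed
    then show ?thesis by simp
  qed
  from r0[of "W y"] have "(norm (W y))^2 = 0" by (simp add: norm_sq_cinner)
  then show ?thesis by simp
qed

lemma selfadj_symm:
  assumes "self_adjoint DS S" "x \<in> DS" "y \<in> DS"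
  shows "cinner (S x) y = cinner x (S y)"
proof -
  have d: "closure DS = UNIV" using assms(1) by (simp add: self_adjoint_def densely_defined_def)
  have "y \<in> adj_dom DS S" using assms by (simp add: self_adjoint_def)
  from adj_char[OF d this assms(2)] show ?thesis using assms by (simp add: self_adjoint_def)
qed

lemma selfadj_closed:
  fixes DS :: "'a::chilbert set"
  assumes sa: "self_adjoint DS S"
  shows "closed (graph DS S)"
  unfolding closed_sequential_limits
proof (intro allI impI)
  fix p :: "nat \<Rightarrow> 'a \<times> 'a" and l
  assume h: "(\<forall>n. p n \<in> graph DS S) \<and> p \<longlonglongrightarrow> l"
  have d: "closure DS = UNIV" using sa by (simp add: self_adjoint_def densely_defined_def)
  define y where "y n = fst (p n)" for n
  have pnn: "p n = (y n, S (y n)) \<and> y n \<in> DS" for n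
  proof -
    obtain x where "p n = (x, S x)" "x \<in> DS" using h unfolding graph_def by blast
    then show ?thesis by (simp add: y_def)
  qed
  then have pn: "p n = (y n, S (y n))" "y n \<in> DS" for n by auto
  have ly: "y \<longlonglongrightarrow> fst l" unfolding y_def using h by (intro tendsto_intros) auto
  have lz: "(\<lambda>n. S (y n)) \<longlonglongrightarrow> snd l"
  proof -
    have "(\<lambda>n. snd (p n)) \<longlonglongrightarrow> snd l" using h by (intro tendsto_intros) auto
    then show ?thesis using pn by simp
  qed
  have "cinner (S x) (fst l) = cinner x (snd l)" if x: "x \<in> DS" for x
  proof -
    have "(\<lambda>n. cinner (S x) (y n)) \<longlonglongrightarrow> cinner (S x) (fst l)" using ly by (intro tendsto_intros)
    moreover have "(\<lambda>n. cinner x (S (y n))) \<longlonglongrightarrow> cinner x (snd l)" using lz by (intro tendsto_intros)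
    moreover have "cinner (S x) (y n) = cinner x (S (y n))" for n
      using selfadj_symm[OF sa x pn(2)] .
    ultimately show ?thesis using LIMSEQ_unique by simp
  qed
  from adj_eqI[OF d, of S "fst l" "snd l", OF this]
  have "fst l \<in> DS" "S (fst l) = snd l" using sa by (auto simp: self_adjoint_def)
  then show "l \<in> graph DS S" by (auto simp: graph_def intro!: exI[of _ "fst l"])
qed

lemma additive_diff:
  fixes F :: "'a::ab_group_add \<Rightarrow> 'b::ab_group_add"
  assumes "\<And>x y. F (x + y) = F x + F y"
  shows "F (x - y) = F x - F y"
  using assms[of "x - y" y] by (simp add: algebra_simps)

lemma core_lemma:
  fixes DX :: "'a::chilbert set" and X :: "'a \<Rightarrow> 'b::chilbert" and F :: "'a \<Rightarrow> 'a"
  assumes lin: "lin_op DX X" and cl: "closed (graph DX X)"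
    and Fadd: "\<And>x y. F (x + y) = F x + F y" and Fsc: "\<And>c x. F (scaleC c x) = scaleC c (F x)"
    and FD: "\<And>x. F x \<in> DX"
    and key: "\<And>z x. z \<in> DX \<Longrightarrow> cinner z (F x) + cinner (X z) (X (F x)) = cinner z x"
  shows "graph DX X = closure {(F x, X (F x)) | x. True}"
proof -
  define E where "E = {(F x, X (F x)) | x. True}"
  have F0: "F 0 = 0" using Fadd[of 0 0] by simp
  have Esub: "csubspace E"
  proof -
    have "(0, 0) \<in> E" unfolding E_def using F0 lin_op_0[OF lin] by (auto intro!: exI[of _ 0])
    moreover have "p + q \<in> E" if "p \<in> E" "q \<in> E" for p q
    proof -
      obtain x where x: "p = (F x, X (F x))" using \<open>p \<in> E\<close> unfolding E_def by blast
      obtain y where y: "q = (F y, X (F y))" using \<open>q \<in> E\<close> unfolding E_def by blast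
      have "p + q = (F (x + y), X (F (x + y)))"
        using x y Fadd lin_op_add[OF lin FD FD] by simp
      then show ?thesis unfolding E_def by blast
    qed
    moreover have "scaleC c p \<in> E" if "p \<in> E" for p c
    proof -
      obtain x where x: "p = (F x, X (F x))" using \<open>p \<in> E\<close> unfolding E_def by blast
      have "scaleC c p = (F (scaleC c x), X (F (scaleC c x)))"
        using x Fsc lin_op_scaleC[OF lin FD] by (simp add: scaleC_prod_def)
      then show ?thesis unfolding E_def by blast
    qed
    ultimately show ?thesis by (simp add: csubspace_def zero_prod_def)
  qed
  have EG: "E \<subseteq> graph DX X" unfolding E_def graph_def using FD by blast
  have "closure E \<subseteq> graph DX X" using closure_minimal[OF EG cl] .
  moreover have "graph DX X \<subseteq> closure E"
  proof
    fix g assume g: "g \<in> graph DX X"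
    then obtain y where y: "y \<in> DX" "g = (y, X y)" unfolding graph_def by blast
    obtain p where p: "p \<in> closure E" "\<And>m. m \<in> closure E \<Longrightarrow> cinner (g - p) m = 0"
      using proj_exists[OF csubspace_closure[OF Esub] closed_closure, of g] by blast
    have "p \<in> graph DX X" using p(1) \<open>closure E \<subseteq> graph DX X\<close> by blast
    then obtain q where q: "q \<in> DX" "p = (q, X q)" unfolding graph_def by blast
    define z where "z = y - q"
    have zD: "z \<in> DX" using y q csubspace_diff[OF lin_op_sub[OF lin]] by (simp add: z_def)
    have gp: "g - p = (z, X z)" using y q lin_op_diff[OF lin] by (simp add: z_def)
    have "cinner z x = 0" for x
    proof -
      have "(F x, X (F x)) \<in> E" unfolding E_def by blast
      then have "(F x, X (F x)) \<in> closure E" by (rule subsetD[OF closure_subset])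
      from p(2)[OF this] have "cinner z (F x) + cinner (X z) (X (F x)) = 0"
        by (simp add: gp cinner_Pair)
      then show ?thesis using key[OF zD] by simp
    qed
    then have "z = 0" by (rule cinner_eq_zero_all)
    then have "g = p" using y q by (simp add: z_def)
    then show "g \<in> closure E" using p(1) by simp
  qed
  ultimately show ?thesis unfolding E_def by blast
qed

lemma norm_transfer:
  fixes DX :: "'a::chilbert set" and X :: "'a \<Rightarrow> 'b::chilbert" and Y :: "'a \<Rightarrow> 'c::chilbert"
    and F :: "'d::chilbert \<Rightarrow> 'a"
  assumes linX: "lin_op DX X" and linY: "lin_op DY Y" and clY: "closed (graph DY Y)"
    and Fadd: "\<And>x y. F (x + y) = F x + F y"
    and FX: "\<And>x. F x \<in> DX" and FY: "\<And>x. F x \<in> DY"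
    and gr: "graph DX X \<subseteq> closure {(F x, X (F x)) | x. True}"
    and nm: "\<And>x. norm (X (F x)) = norm (Y (F x))"
    and v: "v \<in> DX"
  shows "v \<in> DY \<and> norm (Y v) = norm (X v)"
proof -
  have "(v, X v) \<in> closure {(F x, X (F x)) | x. True}" using gr v by (auto simp: graph_def)
  then obtain p where p: "\<forall>n. p n \<in> {(F x, X (F x)) | x. True}" "p \<longlonglongrightarrow> (v, X v)"
    by (auto simp: closure_sequential)
  then have "\<forall>n. \<exists>x. p n = (F x, X (F x))" by blast
  then obtain xs where xs: "\<And>n. p n = (F (xs n), X (F (xs n)))" by metis
  define a where "a = (\<lambda>n. F (xs n))"
  have av: "a \<longlonglongrightarrow> v"
  proof -
    have "(\<lambda>n. fst (p n)) \<longlonglongrightarrow> fst (v, X v)" using p(2) by (intro tendsto_intros)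
    then show ?thesis by (simp add: xs a_def)
  qed
  have aX: "(\<lambda>n. X (a n)) \<longlonglongrightarrow> X v"
  proof -
    have "(\<lambda>n. snd (p n)) \<longlonglongrightarrow> snd (v, X v)" using p(2) by (intro tendsto_intros)
    then show ?thesis by (simp add: xs a_def)
  qed
  have Fdiff: "F (x - y) = F x - F y" for x y using additive_diff[OF Fadd] .
  have dist_eq: "dist (Y (a m)) (Y (a n)) = dist (X (a m)) (X (a n))" for m n
  proof -
    have "Y (a m) - Y (a n) = Y (F (xs m - xs n))"
      by (simp add: a_def Fdiff lin_op_diff[OF linY FY FY])
    moreover have "X (a m) - X (a n) = X (F (xs m - xs n))"
      by (simp add: a_def Fdiff lin_op_diff[OF linX FX FX])
    ultimately show ?thesis by (simp add: dist_norm nm)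
  qed
  have "Cauchy (\<lambda>n. X (a n))" using aX by (rule LIMSEQ_imp_Cauchy)
  then have "Cauchy (\<lambda>n. Y (a n))" unfolding Cauchy_def dist_eq .
  then obtain w where w: "(\<lambda>n. Y (a n)) \<longlonglongrightarrow> w" using convergent_eq_Cauchy by blast
  have aY: "\<And>n. a n \<in> DY" by (simp add: a_def FY)
  from graph_limit[OF clY aY av w] have vY: "v \<in> DY" "Y v = w" by auto
  have "(\<lambda>n. norm (Y (a n))) \<longlonglongrightarrow> norm w" using w by (intro tendsto_intros)
  moreover have "(\<lambda>n. norm (Y (a n))) \<longlonglongrightarrow> norm (X v)"
    using aX tendsto_norm[OF aX] by (simp add: a_def nm)
  ultimately have "norm w = norm (X v)" using LIMSEQ_unique by blast
  then show ?thesis using vY by simp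
qed


context cdd
begin

lemma PA: "P (A x) = x - A x"
  using A_eq[of x] by (metis add_diff_cancel_left')

lemma T_core: "graph D T = closure {(A x, T (A x)) | x. True}"
proof (rule core_lemma[OF linT grcl A_add A_scaleC A_D])
  fix z x assume z: "z \<in> D"
  have "cinner (T z) (T (A x)) = cinner z (P (A x))" using P_char[OF A_DP z] .
  then show "cinner z (A x) + cinner (T z) (T (A x)) = cinner z x"
    using A_eq[of x] by (simp add: cinner_add_right[symmetric])
qed

end

locale vsq = cdd D T for D :: "'a::chilbert set" and T :: "'a \<Rightarrow> 'b::chilbert" +
  fixes DS :: "'a set" and S :: "'a \<Rightarrow> 'a"
  assumes valid: "is_sqrt_TsT D T DS S"

lemma (in cdd) vsqI: "is_sqrt_TsT D T DS S \<Longrightarrow> vsq D T DS S"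
  by (simp add: vsq_def vsq_axioms_def cdd_axioms)

context vsq
begin

lemma sa: "self_adjoint DS S" using valid by (simp add: is_sqrt_TsT_def)
lemma linS: "lin_op DS S" using sa by (simp add: self_adjoint_def densely_defined_def)
lemma denseS: "closure DS = UNIV" using sa by (simp add: self_adjoint_def densely_defined_def)
lemma symm: "x \<in> DS \<Longrightarrow> y \<in> DS \<Longrightarrow> cinner (S x) y = cinner x (S y)"
  using selfadj_symm[OF sa] .
lemma posS: "x \<in> DS \<Longrightarrow> 0 \<le> Re (cinner (S x) x)"
  using valid by (simp add: is_sqrt_TsT_def positive_op_def)
lemma offS: "x \<notin> DS \<Longrightarrow> S x = 0"
  using valid by (simp add: is_sqrt_TsT_def)
lemma dom2: "{x \<in> DS. S x \<in> DS} = DP"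
proof -
  have "comp_dom DS S DS S = comp_dom DTs Ts D T" using valid by (simp add: is_sqrt_TsT_def)
  then have "comp_dom DS S DS S = DP" using DP_comp by simp
  then show ?thesis unfolding comp_dom_def .
qed
lemma DP_DS: "x \<in> DP \<Longrightarrow> x \<in> DS \<and> S x \<in> DS"
  using dom2 by blast
lemma sqS: "x \<in> DP \<Longrightarrow> S (S x) = P x"
proof -
  assume x: "x \<in> DP"
  have "comp_dom DS S DS S = DP" using dom2 by (simp add: comp_dom_def)
  then have "x \<in> comp_dom DS S DS S" using x by simp
  then show ?thesis using valid by (simp add: is_sqrt_TsT_def P_def)
qed
lemma clS: "closed (graph DS S)" using selfadj_closed[OF sa] .
lemma subS: "csubspace DS" using lin_op_sub[OF linS] .

lemma AS: "A x \<in> DS" using DP_DS[OF A_DP] by blast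
lemma SAS: "S (A x) \<in> DS" using DP_DS[OF A_DP] by blast

lemma U1:
  assumes x: "x \<in> DS"
  shows "S (A x) = A (S x)"
proof -
  define u where "u = A x"
  have u: "u \<in> DP" "u \<in> DS" "S u \<in> DS" using A_DP DP_DS by (auto simp: u_def)
  have SSu: "S (S u) = x - u" using sqS[OF u(1)] A_eq[of x] by (simp add: u_def algebra_simps)
  have "x - u \<in> DS" using x u csubspace_diff[OF subS] by blast
  then have "S u \<in> {x \<in> DS. S x \<in> DS}" using u SSu by simp
  then have "S u \<in> DP" unfolding dom2 .
  moreover have "P (S u) = S x - S u"
    using sqS[OF \<open>S u \<in> DP\<close>] SSu lin_op_diff[OF linS x u(2)] by simp
  moreover have "S u + P (S u) = S x" using \<open>P (S u) = S x - S u\<close> by simp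
  ultimately have "A (S x) = S u" using A_unique by metis
  then show ?thesis by (simp add: u_def)
qed

lemma W_add: "S (A (x + y)) = S (A x) + S (A y)"
  using lin_op_add[OF linS AS AS] by (simp add: A_add)

lemma W_scaleC: "S (A (scaleC c x)) = scaleC c (S (A x))"
  using lin_op_scaleC[OF linS AS] by (simp add: A_scaleC)

lemma W_scaleR: "S (A (r *\<^sub>R x)) = r *\<^sub>R (S (A x))"
  by (simp add: scaleR_scaleC W_scaleC)

lemma W_sq: "S (A (S (A x))) = A x - A (A x)"
proof -
  have "S (A (S (A x))) = S (S (A (A x)))" using U1[OF AS] by simp
  also have "\<dots> = P (A (A x))" using sqS[OF A_DP] .
  also have "\<dots> = A x - A (A x)" using A_eq[of "A x"] by (simp add: algebra_simps)
  finally show ?thesis .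
qed

lemma W_commA: "S (A (A x)) = A (S (A x))"
  using U1[OF AS] .

lemma W_sa: "cinner (S (A x)) y = cinner x (S (A y))"
proof -
  have ey: "y = A y + S (S (A y))" using A_eq[of y] sqS[OF A_DP] by simp
  have ex: "x = A x + S (S (A x))" using A_eq[of x] sqS[OF A_DP] by simp
  have "cinner (S (A x)) y = cinner (S (A x)) (A y) + cinner (S (A x)) (S (S (A y)))"
    by (subst ey) (simp add: cinner_add_right)
  also have "cinner (S (A x)) (A y) = cinner (A x) (S (A y))" using symm[OF AS AS] .
  also have "cinner (S (A x)) (S (S (A y))) = cinner (S (S (A x))) (S (A y))"
    using symm[OF SAS SAS] by simp
  also have "cinner (A x) (S (A y)) + cinner (S (S (A x))) (S (A y)) = cinner x (S (A y))"
    by (subst (3) ex) (simp add: cinner_add_left)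
  finally show ?thesis .
qed

lemma W_pos: "0 \<le> Re (cinner (S (A x)) x)"
proof -
  have ex: "x = A x + S (S (A x))" using A_eq[of x] sqS[OF A_DP] by simp
  have "cinner (S (A x)) x = cinner (S (A x)) (A x) + cinner (S (A x)) (S (S (A x)))"
    by (subst (2) ex) (simp add: cinner_add_right)
  then have "Re (cinner (S (A x)) x) = Re (cinner (S (A x)) (A x)) + Re (cinner (S (S (A x))) (S (A x)))"
    by (simp add: Re_cinner_commute[of "S (A x)" "S (S (A x))"])
  then show ?thesis using posS[OF AS] posS[OF SAS] by simp
qed

lemma W_norm: "norm (S (A x)) \<le> norm x"
proof -
  have "(norm (S (A x)))^2 = Re (cinner (S (S (A x))) (A x))"
    using symm[OF SAS AS] by (simp add: norm_sq_cinner)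
  also have "\<dots> = Re (cinner (x - A x) (A x))"
    using sqS[OF A_DP] PA by simp
  also have "\<dots> = Re (cinner x (A x)) - (norm (A x))^2"
    by (simp add: cinner_diff_left norm_sq_cinner)
  also have "\<dots> \<le> norm x * norm (A x)"
    using complex_Re_le_cmod[of "cinner x (A x)"] cauchy_schwarz_c[of x "A x"]
      zero_le_power2[of "norm (A x)"] by linarith
  also have "\<dots> \<le> norm x * norm x" using pc_norm[OF A_pc] by (intro mult_left_mono) auto
  finally have "(norm (S (A x)))^2 \<le> (norm x)^2" by (simp add: power2_eq_square)
  then show ?thesis by (rule power2_le_imp_le) simp
qed

lemma W_bl: "bounded_linear (\<lambda>x. S (A x))"
  by (rule bounded_linear_intro[of _ 1]) (auto simp: W_add W_scaleR W_norm)

end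

context cdd
begin

lemma S0A: "S0 (A x) = C (B x)"
  using S0_B BB by metis

lemma W_eq:
  assumes v: "is_sqrt_TsT D T DS S"
  shows "S (A x) = C (B x)"
proof -
  interpret V: vsq D T DS S using vsqI[OF v] .
  interpret V0: vsq D T DS0 S0 using vsqI[OF S0_valid] .
  define W where "W x = S (A x)" for x
  define W0 where "W0 x = C (B x)" for x
  have W0S: "W0 x = S0 (A x)" for x by (simp add: W0_def S0A)
  have blW: "bounded_linear W" unfolding W_def[abs_def] by (rule V.W_bl)
  have blW0: "bounded_linear W0" unfolding W0S[abs_def] by (rule V0.W_bl)
  have WA: "W (A v) = A (W v)" for v unfolding W_def by (rule V.W_commA)
  have comm: "W (W0 v) = W0 (W v)" for v
  proof -
    have "W (W0 v) = C (W (B v))" unfolding W0_def by (rule comm_C[OF blW WA])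
    also have "\<dots> = C (B (W v))" by (simp add: comm_B[OF blW WA])
    finally show ?thesis by (simp add: W0_def)
  qed
  have Wsa: "cinner (W a) b = cinner a (W b)" for a b unfolding W_def by (rule V.W_sa)
  have W0sa: "cinner (W0 a) b = cinner a (W0 b)" for a b unfolding W0S by (rule V0.W_sa)
  have Wpos: "0 \<le> Re (cinner (W a) a)" for a unfolding W_def by (rule V.W_pos)
  have W0pos: "0 \<le> Re (cinner (W0 a) a)" for a unfolding W0S by (rule V0.W_pos)
  have Wsq: "W (W a) = A a - A (A a)" for a unfolding W_def by (rule V.W_sq)
  have W0sq: "W0 (W0 a) = A a - A (A a)" for a unfolding W0S by (rule V0.W_sq)
  have Wl: "linear W" "linear W0" using blW blW0 bounded_linear.linear by auto
  define y where "y = W x - W0 x"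
  have "W y + W0 y = 0"
    unfolding y_def using Wsq[of x] W0sq[of x] comm[of x] by (simp add: linear_diff[OF Wl(1)] linear_diff[OF Wl(2)])
  then have "Re (cinner (W y) y) + Re (cinner (W0 y) y) = 0"
    by (metis cinner_add_left cinner_zero_left plus_complex.sel(1) zero_complex.sel(1))
  then have z1: "Re (cinner (W y) y) = 0" and z2: "Re (cinner (W0 y) y) = 0"
    using Wpos[of y] W0pos[of y] by linarith+
  have "W y = 0"
    by (rule pos_zero[of W, OF linear_add[OF Wl(1)] linear.scaleR[OF Wl(1)] Wsa Wpos z1])
  moreover have "W0 y = 0"
    by (rule pos_zero[of W0, OF linear_add[OF Wl(2)] linear.scaleR[OF Wl(2)] W0sa W0pos z2])
  ultimately have "cinner y y = 0"
  proof -
    assume h: "W y = 0" "W0 y = 0"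
    have "cinner y y = cinner (W x) y - cinner (W0 x) y" by (simp add: y_def cinner_diff_left)
    also have "\<dots> = cinner x (W y) - cinner x (W0 y)" by (simp only: Wsa W0sa)
    also have "\<dots> = 0" using h by simp
    finally show ?thesis .
  qed
  then have "y = 0" by simp
  then show ?thesis by (simp add: y_def W_def W0_def)
qed

end


context vsq
begin

lemma S_core: "graph DS S = closure {(A x, S (A x)) | x. True}"
proof (rule core_lemma[OF linS clS A_add A_scaleC AS])
  fix z x assume z: "z \<in> DS"
  have "cinner (S z) (S (A x)) = cinner z (S (S (A x)))" using symm[OF z SAS] .
  also have "\<dots> = cinner z (x - A x)" using sqS[OF A_DP] PA by simp
  finally show "cinner z (A x) + cinner (S z) (S (A x)) = cinner z x"
    by (simp add: cinner_diff_right)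
qed

lemma S_graph: "graph DS S = closure {(A x, C (B x)) | x. True}"
  using S_core W_eq[OF valid] by simp

lemma norm_SA: "norm (S (A x)) = norm (T (A x))"
proof -
  have "(norm (S (A x)))^2 = Re (cinner (S (S (A x))) (A x))"
    using symm[OF SAS AS] by (simp add: norm_sq_cinner)
  also have "\<dots> = Re (cinner (A x) (P (A x)))"
    using sqS[OF A_DP] by (simp add: Re_cinner_commute[of "P (A x)"])
  also have "\<dots> = (norm (T (A x)))^2" using P_self[OF A_DP] by simp
  finally show ?thesis by (simp add: power2_eq_iff_nonneg)
qed

lemma DS_eq: "DS = D"
proof
  show "DS \<subseteq> D"
  proof
    fix v assume "v \<in> DS"
    from norm_transfer[OF linS linT grcl A_add AS A_D _ norm_SA this] show "v \<in> D"
      using S_core by simp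
  qed
  show "D \<subseteq> DS"
  proof
    fix v assume "v \<in> D"
    from norm_transfer[OF linT linS clS A_add A_D AS _ norm_SA[symmetric] this] show "v \<in> DS"
      using T_core by simp
  qed
qed

lemma norm_ST: "v \<in> D \<Longrightarrow> norm (S v) = norm (T v)"
  using norm_transfer[OF linT linS clS A_add A_D AS _ norm_SA[symmetric]] T_core by simp

end

context cdd
begin

lemma sqrt_unique:
  assumes v1: "is_sqrt_TsT D T DS1 S1" and v2: "is_sqrt_TsT D T DS2 S2"
  shows "DS1 = DS2 \<and> S1 = S2"
proof -
  interpret V1: vsq D T DS1 S1 using vsqI[OF v1] .
  interpret V2: vsq D T DS2 S2 using vsqI[OF v2] .
  have g: "graph DS1 S1 = graph DS2 S2" using V1.S_graph V2.S_graph by simp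
  have d: "DS1 = DS2" using V1.DS_eq V2.DS_eq by simp
  have "S1 x = S2 x" for x
  proof (cases "x \<in> DS1")
    case True
    then have "(x, S1 x) \<in> graph DS2 S2" using g by (auto simp: graph_def)
    then show ?thesis by (auto simp: graph_def)
  next
    case False
    then show ?thesis using V1.offS V2.offS d by simp
  qed
  then show ?thesis using d by auto
qed

lemma abs_valid: "is_sqrt_TsT D T (abs_dom D T) (abs_op D T)"
proof -
  have "\<exists>!p. is_sqrt_TsT D T (fst p) (snd p)"
  proof (rule ex1I[of _ "(DS0, S0)"])
    show "is_sqrt_TsT D T (fst (DS0, S0)) (snd (DS0, S0))" using S0_valid by simp
    fix p assume "is_sqrt_TsT D T (fst p) (snd p)"
    then show "p = (DS0, S0)" using sqrt_unique[OF _ S0_valid] by (metis prod.collapse)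
  qed
  then have "is_sqrt_TsT D T (fst (abs_op_pair D T)) (snd (abs_op_pair D T))"
    unfolding abs_op_pair_def by (rule theI')
  then show ?thesis by (simp add: abs_dom_def abs_op_def)
qed

end


lemma bounded_below:
  fixes D :: "'a::chilbert set" and T :: "'a \<Rightarrow> 'b::chilbert"
  assumes lin: "lin_op D T" and cl: "closed (graph D T)" and rc: "closed (T ` D)"
  shows "\<exists>c>0. \<forall>x\<in>D. (\<forall>n\<in>D. T n = 0 \<longrightarrow> cinner x n = 0) \<longrightarrow> norm x \<le> c * norm (T x)"
proof -
  define N where "N = {n \<in> D. T n = 0}"
  define D0 where "D0 = {x \<in> D. \<forall>n\<in>N. cinner x n = 0}"
  define R where "R = T ` D"
  have subD: "csubspace D" using lin_op_sub[OF lin] .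
  have subN: "csubspace N"
    using subD lin_op_add[OF lin] lin_op_scaleC[OF lin] lin_op_0[OF lin]
    by (auto simp: N_def csubspace_def)
  have clN: "closed N"
    unfolding closed_sequential_limits
  proof (intro allI impI)
    fix s l assume h: "(\<forall>k. s k \<in> N) \<and> s \<longlonglongrightarrow> l"
    have "(\<lambda>k. T (s k)) \<longlonglongrightarrow> 0" using h by (simp add: N_def)
    with graph_limit[OF cl, of s l 0] h show "l \<in> N" by (auto simp: N_def)
  qed
  have subD0: "csubspace D0"
    using subD lin_op_add[OF lin] by (auto simp: D0_def csubspace_def cinner_add_left cinner_scaleC_left)
  have D0D: "D0 \<subseteq> D" by (auto simp: D0_def)
  have subR: "csubspace R"
  proof -
    have "0 \<in> R" using csubspace_0[OF subD] lin_op_0[OF lin] by (force simp: R_def)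
    moreover have "a + b \<in> R" if "a \<in> R" "b \<in> R" for a b
      using that lin_op_add[OF lin] csubspace_add[OF subD] by (force simp: R_def)
    moreover have "scaleC c a \<in> R" if ha: "a \<in> R" for a c
    proof -
      obtain x where x: "x \<in> D" "a = T x" using ha by (auto simp: R_def)
      then have "scaleC c a = T (scaleC c x)" using lin_op_scaleC[OF lin] by simp
      moreover have "scaleC c x \<in> D" using x csubspace_scaleC[OF subD] by blast
      ultimately show ?thesis by (auto simp: R_def)
    qed
    ultimately show ?thesis by (simp add: csubspace_def)
  qed
  have clR: "closed R" using rc by (simp add: R_def)
  have TD0: "T ` D0 = R"
  proof
    show "T ` D0 \<subseteq> R" using D0D by (auto simp: R_def)
    show "R \<subseteq> T ` D0"
    proof
      fix y assume "y \<in> R"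
      then obtain x where x: "x \<in> D" "y = T x" by (auto simp: R_def)
      obtain p where p: "p \<in> N" "\<And>m. m \<in> N \<Longrightarrow> cinner (x - p) m = 0"
        using proj_exists[OF subN clN, of x] by blast
      have pD: "p \<in> D" "T p = 0" using p(1) by (auto simp: N_def)
      have "x - p \<in> D0" using p(2) x pD csubspace_diff[OF subD] by (auto simp: D0_def)
      moreover have "T (x - p) = y" using x pD lin_op_diff[OF lin] by simp
      ultimately show "y \<in> T ` D0" by force
    qed
  qed
  \<comment> \<open>Baire category step\<close>
  define F where "F n = closure (T ` (D0 \<inter> cball 0 (real n)))" for n :: nat
  have FR: "F n \<subseteq> R" for n
    unfolding F_def using TD0 clR by (intro closure_minimal) auto
  have UF: "\<Union>(range F) = R"
  proof
    show "\<Union>(range F) \<subseteq> R" using FR by blast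
    show "R \<subseteq> \<Union>(range F)"
    proof
      fix y assume "y \<in> R"
      then obtain x where x: "x \<in> D0" "y = T x" using TD0 by (metis imageE)
      obtain n :: nat where "norm x \<le> real n" using real_arch_simple by blast
      then have "y \<in> T ` (D0 \<inter> cball 0 (real n))" using x by auto
      then have "y \<in> F n" unfolding F_def by (rule subsetD[OF closure_subset])
      then show "y \<in> \<Union>(range F)" by blast
    qed
  qed
  have "\<exists>n. top_of_set R interior_of F n \<noteq> {}"
  proof (rule ccontr)
    assume "\<not> ?thesis"
    then have empty: "\<And>n. top_of_set R interior_of F n = {}" by blast
    have "top_of_set R interior_of \<Union>(range F) = {}"
    proof (rule Baire_category_alt)
      show "completely_metrizable_space (top_of_set R) \<or>
          locally_compact_space (top_of_set R) \<and> regular_space (top_of_set R)"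
      proof (rule disjI1)
        have "closedin euclidean R" using closed_closedin[THEN iffD1, OF clR] .
        then show "completely_metrizable_space (top_of_set R)"
          by (rule completely_metrizable_space_closedin[OF completely_metrizable_space_euclidean])
      qed
      show "countable (range F)" by simp
      fix S assume "S \<in> range F"
      then obtain n where n: "S = F n" by blast
      show "closedin (top_of_set R) S \<and> top_of_set R interior_of S = {}"
      proof
        have "closed (F n)" by (simp add: F_def)
        then show "closedin (top_of_set R) S" using closed_subset[OF FR] n by simp
        show "top_of_set R interior_of S = {}" using empty n by simp
      qed
    qed
    moreover have "top_of_set R interior_of \<Union>(range F) = R"
      using UF interior_of_topspace[of "top_of_set R"] by simp
    moreover have "0 \<in> R" using csubspace_0[OF subR] .
    ultimately show False by simp
  qed
  then obtain n y0 where "y0 \<in> top_of_set R interior_of F n" by blast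
  then obtain U where U: "openin (top_of_set R) U" "y0 \<in> U" "U \<subseteq> F n"
    by (auto simp: interior_of_def)
  then obtain V where V: "open V" "U = R \<inter> V" by (auto simp: openin_open)
  then obtain r where r: "r > 0" "ball y0 r \<subseteq> V" using U(2) open_contains_ball by blast
  have y0R: "y0 \<in> R" and y0F: "y0 \<in> F n" using U V by auto
  have ballF: "ball y0 r \<inter> R \<subseteq> F n" using r U V by blast
  \<comment> \<open>symmetrisation\<close>
  have diffF: "a - b \<in> closure (T ` (D0 \<inter> cball 0 (2 * real n)))" if hab: "a \<in> F n" "b \<in> F n" for a b
    unfolding closure_approachable
  proof (intro allI impI)
    fix e :: real assume e: "e > 0"
    obtain a' where a': "a' \<in> T ` (D0 \<inter> cball 0 (real n))" "dist a' a < e / 2"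
      using hab(1) e unfolding F_def closure_approachable by (meson half_gt_zero)
    obtain b' where b': "b' \<in> T ` (D0 \<inter> cball 0 (real n))" "dist b' b < e / 2"
      using hab(2) e unfolding F_def closure_approachable by (meson half_gt_zero)
    obtain u where u: "u \<in> D0" "norm u \<le> real n" "a' = T u" using a' by auto
    obtain v where v: "v \<in> D0" "norm v \<le> real n" "b' = T v" using b' by auto
    have "u - v \<in> D0" using u v csubspace_diff[OF subD0] by blast
    moreover have "norm (u - v) \<le> 2 * real n"
      using norm_triangle_ineq4[of u v] u v by linarith
    moreover have "a' - b' = T (u - v)"
    proof -
      have "u \<in> D" "v \<in> D" using u v D0D by auto
      then show ?thesis using u(3) v(3) lin_op_diff[OF lin] by simp
    qed
    ultimately have "a' - b' \<in> T ` (D0 \<inter> cball 0 (2 * real n))" by auto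
    moreover have "dist (a' - b') (a - b) < e"
    proof -
      have "dist (a' - b') (a - b) \<le> dist a' a + dist b' b"
        by (simp add: dist_norm) (metis diff_diff_eq2 diff_add_eq norm_triangle_ineq4 add_diff_eq
            diff_diff_add)
      then show ?thesis using a'(2) b'(2) by linarith
    qed
    ultimately show "\<exists>z\<in>T ` (D0 \<inter> cball 0 (2 * real n)). dist z (a - b) < e" by blast
  qed
  define K where "K = 2 * real n"
  have K0: "K \<ge> 0" by (simp add: K_def)
  have small: "y \<in> closure (T ` (D0 \<inter> cball 0 K))" if "y \<in> R" "norm y < r" for y
  proof -
    have "y0 + y \<in> R" using y0R that csubspace_add[OF subR] by blast
    moreover have "y0 + y \<in> ball y0 r" using that by (simp add: dist_norm)
    ultimately have "y0 + y \<in> F n" using ballF by blast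
    from diffF[OF this y0F] show ?thesis by (simp add: K_def)
  qed
  define M where "M = 2 * K / r"
  have M0: "M \<ge> 0" using K0 r by (simp add: M_def)
  have approx: "\<exists>x\<in>D0. norm x \<le> M * norm y \<and> norm (y - T x) < e" if y: "y \<in> R" and e: "e > 0" for y e
  proof (cases "y = 0")
    case True
    then show ?thesis using e csubspace_0[OF subD0] lin_op_0[OF lin] by (intro bexI[of _ 0]) auto
  next
    case False
    define t where "t = r / (2 * norm y)"
    have t0: "t > 0" using False r by (simp add: t_def)
    have ty: "scaleR t y \<in> R" using y csubspace_scaleR[OF subR] by blast
    have "norm (scaleR t y) = r / 2" using False r by (simp add: t_def)
    then have "norm (scaleR t y) < r" using r by simp
    from small[OF ty this] have "\<forall>\<epsilon>>0. \<exists>z\<in>T ` (D0 \<inter> cball 0 K). dist z (scaleR t y) < \<epsilon>"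
      unfolding closure_approachable .
    then obtain z where z: "z \<in> T ` (D0 \<inter> cball 0 K)" "dist z (scaleR t y) < e * t"
      using e t0 by (meson mult_pos_pos)
    then obtain x' where x': "x' \<in> D0" "norm x' \<le> K" "dist (T x') (scaleR t y) < e * t"
      by auto
    define x where "x = scaleR (1 / t) x'"
    have "x \<in> D0" using x' csubspace_scaleR[OF subD0] by (simp add: x_def)
    moreover have "norm x \<le> M * norm y"
    proof -
      have "norm x = norm x' / t" using t0 by (simp add: x_def)
      also have "\<dots> \<le> K / t" using x'(2) t0 by (simp add: divide_right_mono)
      also have "\<dots> = M * norm y" using False r by (simp add: t_def M_def field_simps)
      finally show ?thesis .
    qed
    moreover have "norm (y - T x) < e"
    proof -
      have Tx: "T x = scaleR (1 / t) (T x')" using x' D0D lin_op_scaleR[OF lin] by (auto simp: x_def)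
      have "y - T x = scaleR (1 / t) (scaleR t y - T x')"
        using t0 by (simp add: Tx scaleR_diff_right)
      then have "norm (y - T x) = dist (T x') (scaleR t y) / t"
        using t0 by (simp add: dist_norm norm_minus_commute)
      also have "\<dots> < e" using x'(3) t0 by (simp add: divide_less_eq)
      finally show ?thesis .
    qed
    ultimately show ?thesis by blast
  qed
  then obtain g where g: "\<And>y e. y \<in> R \<Longrightarrow> e > 0 \<Longrightarrow> g y e \<in> D0 \<and> norm (g y e) \<le> M * norm y \<and> norm (y - T (g y e)) < e"
    by metis
  have preimage: "\<exists>x\<in>D0. T x = y \<and> norm x \<le> 2 * M * norm y" if y: "y \<in> R" for y
  proof (cases "y = 0")
    case True
    then show ?thesis using csubspace_0[OF subD0] lin_op_0[OF lin] by (intro bexI[of _ 0]) auto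
  next
    case False
    define d where "d = norm y"
    have d0: "d > 0" using False by (simp add: d_def)
    define ys where "ys = rec_nat y (\<lambda>k v. v - T (g v (d / 2^(Suc k))))"
    have ys0: "ys 0 = y" by (simp add: ys_def)
    have ysS: "ys (Suc k) = ys k - T (g (ys k) (d / 2^(Suc k)))" for k by (simp add: ys_def)
    define xs where "xs k = g (ys k) (d / 2^(Suc k))" for k
    have inv: "ys k \<in> R \<and> norm (ys k) \<le> d / 2^k" for k
    proof (induction k)
      case 0 then show ?case using y by (simp add: ys0 d_def)
    next
      case (Suc k)
      have gk: "xs k \<in> D0" "norm (ys k - T (xs k)) < d / 2^(Suc k)"
        using g[of "ys k" "d / 2^(Suc k)"] Suc d0 by (auto simp: xs_def)
      have "T (xs k) \<in> R" using gk D0D by (auto simp: R_def)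
      then have "ys (Suc k) \<in> R" using Suc csubspace_diff[OF subR] by (simp add: ysS xs_def)
      moreover have "norm (ys (Suc k)) \<le> d / 2^(Suc k)" using gk by (simp add: ysS xs_def)
      ultimately show ?case by simp
    qed
    have xsD0: "xs k \<in> D0" for k using g[of "ys k" "d / 2^(Suc k)"] inv d0 by (auto simp: xs_def)
    have xsn: "norm (xs k) \<le> M * d * (1/2)^k" for k
    proof -
      have "norm (xs k) \<le> M * norm (ys k)" using g[of "ys k" "d / 2^(Suc k)"] inv d0 by (auto simp: xs_def)
      also have "\<dots> \<le> M * (d / 2^k)" using inv M0 by (intro mult_left_mono) auto
      finally show ?thesis by (simp add: power_divide)
    qed
    have sumg: "summable (\<lambda>k. M * d * (1/2::real)^k)"
      by (intro summable_mult summable_geometric) simp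
    have sumn: "summable (\<lambda>k. norm (xs k))"
      by (rule summable_comparison_test'[OF sumg]) (simp add: xsn)
    have sumx: "summable xs" using sumn summable_norm_cancel by blast
    define x where "x = suminf xs"
    have sx: "(\<lambda>m. \<Sum>k<m. xs k) \<longlonglongrightarrow> x" unfolding x_def by (rule summable_LIMSEQ[OF sumx])
    have xsD: "xs k \<in> D" for k using xsD0 D0D by blast
    have sumD: "(\<Sum>k<m. xs k) \<in> D" for m by (rule csubspace_sum[OF subD]) (rule xsD)
    have Ts: "T (\<Sum>k<m. xs k) = y - ys m" for m
    proof (induction m)
      case 0 then show ?case using lin_op_0[OF lin] by (simp add: ys0)
    next
      case (Suc m)
      have "T (\<Sum>k<Suc m. xs k) = T (\<Sum>k<m. xs k) + T (xs m)"
        using lin_op_add[OF lin sumD xsD] by simp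
      then show ?case using Suc by (simp add: ysS xs_def)
    qed
    have ys_lim: "ys \<longlonglongrightarrow> 0"
    proof (rule Lim_null_comparison)
      show "\<forall>\<^sub>F k in sequentially. norm (ys k) \<le> d * (1/2)^k"
        using inv by (intro always_eventually allI) (simp add: power_divide)
      show "(\<lambda>k. d * (1/2::real)^k) \<longlonglongrightarrow> 0"
        by (intro tendsto_mult_right_zero LIMSEQ_power_zero) simp
    qed
    have "(\<lambda>m. T (\<Sum>k<m. xs k)) \<longlonglongrightarrow> y"
      unfolding Ts using tendsto_diff[OF tendsto_const ys_lim, of y] by simp
    moreover have "\<And>m. (\<Sum>k<m. xs k) \<in> D" by (rule sumD)
    ultimately have xD: "x \<in> D" "T x = y" using graph_limit[OF cl _ sx] by auto
    have "x \<in> D0"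
    proof -
      have "cinner x m = 0" if m: "m \<in> N" for m
      proof -
        have "(\<lambda>j. cinner (\<Sum>k<j. xs k) m) \<longlonglongrightarrow> cinner x m" using sx by (intro tendsto_intros)
        moreover have "cinner (\<Sum>k<j. xs k) m = 0" for j
          using xsD0 m by (simp add: cinner_sum_left D0_def)
        ultimately have "(\<lambda>j. 0::complex) \<longlonglongrightarrow> cinner x m" by simp
        then show ?thesis by (simp add: LIMSEQ_const_iff)
      qed
      then show ?thesis using xD by (simp add: D0_def)
    qed
    moreover have "norm x \<le> 2 * M * norm y"
    proof -
      have "norm x \<le> (\<Sum>k. norm (xs k))" unfolding x_def by (rule summable_norm[OF sumn])
      also have "\<dots> \<le> (\<Sum>k. M * d * (1/2::real)^k)" by (rule suminf_le[OF xsn sumn sumg])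
      also have "\<dots> = M * d * 2" using suminf_geometric[of "1/2::real"] by (simp add: suminf_mult)
      finally show ?thesis by (simp add: d_def)
    qed
    ultimately show ?thesis using xD by blast
  qed
  show ?thesis
  proof (intro exI[of _ "2 * M + 1"] conjI ballI impI)
    show "2 * M + 1 > 0" using M0 by simp
    fix x' assume x': "x' \<in> D" "\<forall>n\<in>D. T n = 0 \<longrightarrow> cinner x' n = 0"
    then have x'D0: "x' \<in> D0" by (auto simp: D0_def N_def)
    have "T x' \<in> R" using x' by (simp add: R_def)
    from preimage[OF this] obtain x where x: "x \<in> D0" "T x = T x'" "norm x \<le> 2 * M * norm (T x')" by blast
    have xD: "x \<in> D" "x' \<in> D" using x(1) x'D0 D0D by auto
    have "x' - x \<in> N"
      using xD x(2) lin_op_diff[OF lin xD(2) xD(1)] csubspace_diff[OF subD xD(2) xD(1)] by (simp add: N_def)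
    moreover have "x' - x \<in> D0" using x x'D0 csubspace_diff[OF subD0] by blast
    ultimately have "cinner (x' - x) (x' - x) = 0" by (simp add: D0_def)
    then have "x' = x" by simp
    then show "norm x' \<le> (2 * M + 1) * norm (T x')"
      using x(3) by (simp add: distrib_right) (meson norm_ge_zero order_trans le_add_same_cancel1)
  qed
qed


lemma kernel_sub_closed:
  fixes D :: "'a::chilbert set" and T :: "'a \<Rightarrow> 'b::chilbert"
  assumes lin: "lin_op D T" and cl: "closed (graph D T)"
  shows "csubspace {n \<in> D. T n = 0}" "closed {n \<in> D. T n = 0}"
proof -
  have subD: "csubspace D" using lin_op_sub[OF lin] .
  show "csubspace {n \<in> D. T n = 0}"
    using subD lin_op_add[OF lin] lin_op_scaleC[OF lin] lin_op_0[OF lin]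
    by (auto simp: csubspace_def)
  show "closed {n \<in> D. T n = 0}"
    unfolding closed_sequential_limits
  proof (intro allI impI)
    fix s l assume h: "(\<forall>k. s k \<in> {n \<in> D. T n = 0}) \<and> s \<longlonglongrightarrow> l"
    have "(\<lambda>k. T (s k)) \<longlonglongrightarrow> 0" using h by simp
    with graph_limit[OF cl, of s l 0] h show "l \<in> {n \<in> D. T n = 0}" by auto
  qed
qed

theorem lemma2p11:
  fixes D :: "'a::chilbert set" and T :: "'a \<Rightarrow> 'b::chilbert"
  assumes "densely_defined D T"
    and "closed_op D T"
    and "closed (T ` D)"
  shows "closed_op (comp_dom D T (abs_dom D T) (abs_op D T)) (T \<circ> abs_op D T)
    \<and> (T \<circ> abs_op D T) ` comp_dom D T (abs_dom D T) (abs_op D T) = T ` D"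
proof -
  interpret cdd D T using assms(1,2) by (simp add: cdd_def)
  define DS where "DS = abs_dom D T"
  define S where "S = abs_op D T"
  interpret V: vsq D T DS S using vsqI[OF abs_valid] by (simp add: DS_def S_def)
  have DSD: "DS = D" by (rule V.DS_eq)
  have nST: "v \<in> D \<Longrightarrow> norm (S v) = norm (T v)" for v by (rule V.norm_ST)
  define N where "N = {n \<in> D. T n = 0}"
  have subN: "csubspace N" "closed N" unfolding N_def using kernel_sub_closed[OF linT grcl] by auto
  have SN: "n \<in> N \<Longrightarrow> S n = 0" for n using nST[of n] by (simp add: N_def)
  obtain c where c: "c > 0" "\<And>x. x \<in> D \<Longrightarrow> (\<forall>n\<in>D. T n = 0 \<longrightarrow> cinner x n = 0) \<Longrightarrow> norm x \<le> c * norm (T x)"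
    using bounded_below[OF linT grcl assms(3)] by blast
  have bb: "norm x \<le> c * norm (T x)" if "x \<in> D" "\<And>n. n \<in> N \<Longrightarrow> cinner x n = 0" for x
    using c(2)[of x] that by (auto simp: N_def)
  have Sperp: "cinner (S x) n = 0" if "x \<in> DS" "n \<in> N" for x n
  proof -
    have "n \<in> DS" using that DSD by (simp add: N_def)
    then have "cinner (S x) n = cinner x (S n)" using V.symm that by blast
    then show ?thesis using SN[OF that(2)] by simp
  qed
  define M where "M = comp_dom D T DS S"
  have M_def': "M = {x \<in> DS. S x \<in> D}" by (simp add: M_def comp_dom_def)
  have subD: "csubspace D" using subD .
  have linTS: "lin_op M (T \<circ> S)"
  proof -
    have "0 \<in> M" using csubspace_0[OF V.subS] lin_op_0[OF V.linS] csubspace_0[OF subD]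
      by (simp add: M_def')
    moreover have "x + y \<in> M \<and> T (S (x + y)) = T (S x) + T (S y)" if "x \<in> M" "y \<in> M" for x y
      using that lin_op_add[OF V.linS] csubspace_add[OF V.subS] csubspace_add[OF subD]
        lin_op_add[OF linT] by (simp add: M_def')
    moreover have "scaleC a x \<in> M \<and> T (S (scaleC a x)) = scaleC a (T (S x))" if "x \<in> M" for x a
      using that lin_op_scaleC[OF V.linS] csubspace_scaleC[OF V.subS] csubspace_scaleC[OF subD]
        lin_op_scaleC[OF linT] by (simp add: M_def')
    ultimately show ?thesis by (simp add: lin_op_def csubspace_def)
  qed
  have clTS: "closed (graph M (T \<circ> S))"
    unfolding closed_sequential_limits
  proof (intro allI impI)
    fix p l assume h: "(\<forall>k. p k \<in> graph M (T \<circ> S)) \<and> p \<longlonglongrightarrow> l"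
    define x where "x k = fst (p k)" for k
    have px: "p k = (x k, T (S (x k))) \<and> x k \<in> M" for k
    proof -
      obtain z where "p k = (z, (T \<circ> S) z)" "z \<in> M" using h unfolding graph_def by blast
      then show ?thesis by (simp add: x_def)
    qed
    have xM: "x k \<in> DS" "S (x k) \<in> D" for k using px by (auto simp: M_def')
    have xl: "x \<longlonglongrightarrow> fst l" unfolding x_def using h by (intro tendsto_intros) auto
    have tl: "(\<lambda>k. T (S (x k))) \<longlonglongrightarrow> snd l"
    proof -
      have "(\<lambda>k. snd (p k)) \<longlonglongrightarrow> snd l" using h by (intro tendsto_intros) auto
      then show ?thesis using px by simp
    qed
    define s where "s k = S (x k)" for k
    have sdist: "dist (s i) (s j) \<le> c * dist (T (s i)) (T (s j))" for i j
    proof -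
      have "s i - s j \<in> D" using xM csubspace_diff[OF subD] by (simp add: s_def)
      moreover have "cinner (s i - s j) n = 0" if "n \<in> N" for n
        using Sperp[OF xM(1) that] Sperp[OF xM(1) that] by (simp add: s_def cinner_diff_left Sperp[OF xM(1) that])
      ultimately have "norm (s i - s j) \<le> c * norm (T (s i - s j))" using bb by blast
      moreover have "T (s i - s j) = T (s i) - T (s j)" using lin_op_diff[OF linT] xM by (simp add: s_def)
      ultimately show ?thesis by (simp add: dist_norm)
    qed
    have "Cauchy (\<lambda>k. T (s k))" using tl LIMSEQ_imp_Cauchy by (simp add: s_def)
    have "Cauchy s"
    proof (rule metric_CauchyI)
      fix e :: real assume e: "e > 0"
      then have "e / c > 0" using c by simp
      then obtain K where K: "\<forall>i\<ge>K. \<forall>j\<ge>K. dist (T (s i)) (T (s j)) < e / c"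
        using \<open>Cauchy (\<lambda>k. T (s k))\<close> unfolding Cauchy_def by blast
      have "dist (s i) (s j) < e" if "i \<ge> K" "j \<ge> K" for i j
      proof -
        have "dist (s i) (s j) \<le> c * dist (T (s i)) (T (s j))" by (rule sdist)
        also have "\<dots> < c * (e / c)" using K that c by (intro mult_strict_left_mono) auto
        finally show ?thesis using c by simp
      qed
      then show "\<exists>K. \<forall>i\<ge>K. \<forall>j\<ge>K. dist (s i) (s j) < e" by blast
    qed
    then obtain sl where sl: "s \<longlonglongrightarrow> sl" using convergent_eq_Cauchy by blast
    have sS: "s = (\<lambda>k. S (x k))" by (simp add: fun_eq_iff s_def)
    have "(\<lambda>k. S (x k)) \<longlonglongrightarrow> sl" using sl sS by simp
    from graph_limit[OF V.clS xM(1) xl this] have a: "fst l \<in> DS" "S (fst l) = sl" by auto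
    have b: "sl \<in> D" "T sl = snd l" using graph_limit[OF grcl, of s sl "snd l"] xM(2) sl tl
      by (auto simp: s_def)
    have "fst l \<in> M" using a b by (simp add: M_def')
    then show "l \<in> graph M (T \<circ> S)" using a b
      by (auto simp: graph_def intro!: exI[of _ "fst l"])
  qed
  obtain pr where pr: "\<And>z. pr z \<in> N" "\<And>z m. m \<in> N \<Longrightarrow> cinner (z - pr z) m = 0"
    using proj_exists[OF subN] by metis
  have prD: "pr z \<in> D" "T (pr z) = 0" "S (pr z) = 0" for z
    using pr(1)[of z] SN by (auto simp: N_def)
  define RS where "RS = S ` DS"
  have subRS: "csubspace RS"
  proof -
    have "0 \<in> RS" using csubspace_0[OF V.subS] lin_op_0[OF V.linS] by (force simp: RS_def)
    moreover have "a + b \<in> RS" if hab: "a \<in> RS" "b \<in> RS" for a b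
    proof -
      obtain u where "u \<in> DS" "a = S u" using hab(1) by (auto simp: RS_def)
      moreover obtain v where "v \<in> DS" "b = S v" using hab(2) by (auto simp: RS_def)
      ultimately show ?thesis using lin_op_add[OF V.linS] csubspace_add[OF V.subS] by (force simp: RS_def)
    qed
    moreover have "scaleC a b \<in> RS" if hb: "b \<in> RS" for a b
    proof -
      obtain v where v: "v \<in> DS" "b = S v" using hb by (auto simp: RS_def)
      then have "scaleC a b = S (scaleC a v)" using lin_op_scaleC[OF V.linS] by simp
      moreover have "scaleC a v \<in> DS" using v csubspace_scaleC[OF V.subS] by blast
      ultimately show ?thesis by (auto simp: RS_def)
    qed
    ultimately show ?thesis by (simp add: csubspace_def)
  qed
  have clRS: "closed RS"
    unfolding closed_sequential_limits
  proof (intro allI impI)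
    fix v l assume h: "(\<forall>k. v k \<in> RS) \<and> v \<longlonglongrightarrow> l"
    then have "\<forall>k. \<exists>u. u \<in> DS \<and> v k = S u" by (auto simp: RS_def)
    then obtain u where u: "\<And>k. u k \<in> DS" "\<And>k. v k = S (u k)" by metis
    define w where "w k = u k - pr (u k)" for k
    have wD: "w k \<in> DS" for k using u(1) prD DSD csubspace_diff[OF V.subS] by (simp add: w_def)
    have Sw: "S (w k) = v k" for k using lin_op_diff[OF V.linS] u prD DSD by (simp add: w_def)
    have wperp: "cinner (w k) n = 0" if "n \<in> N" for k n using pr(2)[OF that] by (simp add: w_def)
    have wdist: "dist (w i) (w j) \<le> c * dist (v i) (v j)" for i j
    proof -
      have wd: "w i - w j \<in> D" using wD DSD csubspace_diff[OF subD] by simp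
      moreover have "cinner (w i - w j) n = 0" if "n \<in> N" for n
        using wperp[OF that] by (simp add: cinner_diff_left)
      ultimately have "norm (w i - w j) \<le> c * norm (T (w i - w j))" using bb by blast
      also have "norm (T (w i - w j)) = norm (S (w i - w j))" using nST[OF wd] by simp
      also have "S (w i - w j) = v i - v j" using lin_op_diff[OF V.linS wD wD] Sw by simp
      finally show ?thesis by (simp add: dist_norm)
    qed
    have "Cauchy v" using h LIMSEQ_imp_Cauchy by blast
    have "Cauchy w"
    proof (rule metric_CauchyI)
      fix e :: real assume e: "e > 0"
      then have "e / c > 0" using c by simp
      then obtain K where K: "\<forall>i\<ge>K. \<forall>j\<ge>K. dist (v i) (v j) < e / c"
        using \<open>Cauchy v\<close> unfolding Cauchy_def by blast
      have "dist (w i) (w j) < e" if "i \<ge> K" "j \<ge> K" for i j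
      proof -
        have "dist (w i) (w j) \<le> c * dist (v i) (v j)" by (rule wdist)
        also have "\<dots> < c * (e / c)" using K that c by (intro mult_strict_left_mono) auto
        finally show ?thesis using c by simp
      qed
      then show "\<exists>K. \<forall>i\<ge>K. \<forall>j\<ge>K. dist (w i) (w j) < e" by blast
    qed
    then obtain wl where wl: "w \<longlonglongrightarrow> wl" using convergent_eq_Cauchy by blast
    have "(\<lambda>k. S (w k)) \<longlonglongrightarrow> l" using h Sw by simp
    from graph_limit[OF V.clS wD wl this] show "l \<in> RS" by (auto simp: RS_def)
  qed
  have rng: "T ` D \<subseteq> (T \<circ> S) ` M"
  proof
    fix y assume "y \<in> T ` D"
    then obtain x where x: "x \<in> D" "y = T x" by auto
    define x2 where "x2 = x - pr x"
    have x2D: "x2 \<in> D" using x prD csubspace_diff[OF subD] by (simp add: x2_def)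
    have Tx2: "T x2 = y" using x prD lin_op_diff[OF linT] by (simp add: x2_def)
    have x2perp: "cinner x2 n = 0" if "n \<in> N" for n using pr(2)[OF that] by (simp add: x2_def)
    obtain r where r: "r \<in> RS" "\<And>m. m \<in> RS \<Longrightarrow> cinner (x2 - r) m = 0"
      using proj_exists[OF subRS clRS, of x2] by blast
    define q where "q = x2 - r"
    have "cinner (S w) q = cinner w 0" if "w \<in> DS" for w
    proof -
      have "cinner q (S w) = 0" using r(2)[of "S w"] that by (simp add: q_def RS_def)
      then have "cinner (S w) q = 0" by (metis cinner_commute complex_cnj_zero)
      then show ?thesis by simp
    qed
    then have "q \<in> adj_dom DS S" "adj DS S q = 0" using adj_eqI[OF V.denseS] by blast+
    then have qDS: "q \<in> DS" "S q = 0" using V.sa by (auto simp: self_adjoint_def)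
    then have qN: "q \<in> N" using nST[of q] DSD by (simp add: N_def)
    obtain w where w: "w \<in> DS" "r = S w" using r(1) by (auto simp: RS_def)
    have "cinner r q = 0" using V.symm[OF w(1) qDS(1)] qDS(2) w(2) by simp
    moreover have "cinner x2 q = 0" by (rule x2perp[OF qN])
    ultimately have "cinner q q = 0" by (simp add: q_def cinner_diff_left)
    then have "q = 0" by simp
    then have "x2 = S w" using w by (simp add: q_def)
    then have "w \<in> M" "(T \<circ> S) w = y" using w x2D Tx2 by (auto simp: M_def')
    then show "y \<in> (T \<circ> S) ` M" by blast
  qed
  have "(T \<circ> S) ` M \<subseteq> T ` D" by (auto simp: M_def')
  with rng have "(T \<circ> S) ` M = T ` D" by blast
  moreover have "closed_op M (T \<circ> S)" using linTS clTS by (simp add: closed_op_def)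
  ultimately show ?thesis by (simp add: M_def DS_def S_def)
qed


end
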